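(* Let $\mathbf X=(X_1,\dots,X_M)$ have density $f\in\mathrm{MMEam}$ of the form $f(x_1,\dots,x_M)=\sum_{\mathbf i\in\mathscr S}p_{\mathbf i}f_{i_1}(x_1)\cdots f_{i_M}(x_M)$, let $\theta_1,\dots,\theta_M\in[0,1)$, write $v_k=\mathrm{V@R}_{\theta_k}(X_k)$, $\mathbf v=(v_1,\dots,v_M)$, and condition on the event $E=\{X_1>v_1,\dots,X_M>v_M\}$ (assumed to have positive probability). Then for $1\le j\le M$, $$\mathbb E[X_j\mid E]=v_j+\sum_{\mathbf i\in\mathscr S}p^{\mathrm{RL}}_{\mathbf v,\mathbf i}\,\alpha^{\mathrm{RL}}_{v_j,i_j}(-T_{i_j})^{-2}t_{i_j};$$ $$\mathbb E[X_j^2\mid E]=-v_j^2+2v_j\mathbb E[X_j\mid E]+2\sum_{\mathbf i\in\mathscr S}p^{\mathrm{RL}}_{\mathbf v,\mathbf i}\,\alpha^{\mathrm{RL}}_{v_j,i_j}(-T_{i_j})^{-3}t_{i_j};$$ and for $j_1\ne j_2$, $$\mathbb E[X_{j_1}X_{j_2}\mid E]=-v_{j_1}v_{j_2}+v_{j_1}\mathbb E[X_{j_2}\mid E]+v_{j_2}\mathbb E[X_{j_1}\mid E]+\sum_{\mathbf i\in\mathscr S}p^{\mathrm{RL}}_{\mathbf v,\mathbf i}\big(\alpha^{\mathrm{RL}}_{v_{j_1},i_{j_1}}(-T_{i_{j_1}})^{-2}t_{i_{j_1}}\big)\big(\alpha^{\mathrm{RL}}_{v_{j_2},i_{j_2}}(-T_{i_{j_2}})^{-2}t_{i_{j_2}}\big).$$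 Here $\alpha^{\mathrm{RL}}_{z,k}=\alpha_ke^{T_kz}/(\alpha_ke^{T_kz}l_k)$ and $p^{\mathrm{RL}}_{\mathbf z,\mathbf i}=p_{\mathbf i}\prod_{k=1}^M(\alpha_{i_k}e^{T_{i_k}z_k}l_{i_k})\big/\sum_{\mathbf h\in\mathscr S}p_{\mathbf h}\prod_{k=1}^M(\alpha_{h_k}e^{T_{h_k}z_k}l_{h_k})$. (These give the multivariate tail conditional expectation $\mathbb E[\mathbf X\mid E]$ and, via $\mathbb E[X_{j_1}X_{j_2}\mid E]-\mathbb E[X_{j_1}\mid E]\mathbb E[X_{j_2}\mid E]$, the entries of the multivariate tail covariance matrix.)
   Context: An ME density is a probability density on $[0,\infty)$ of the form $g(x)=\alpha e^{Tx}t$ ($\alpha$ real row vector, $T$ real square matrix, $t$ real column vector); triples are taken with all eigenvalues of $T$ having strictly negative real part, so $T$ is invertible; $l=(-T)^{-1}t$ and the survival function is $\alpha e^{Tx}l$. MMEam: fix $L,M\in\mathbb N_+$ and ME densities $f_1,\dots,f_L$ with triples $(\alpha_j,T_j,t_j)$, $l_j=(-T_j)^{-1}t_j$. Let $\mathscr S=\{1,\dots,L\}^M$, $\mathbf i=(i_1,\dots,i_M)$, and real numbers $p_{\mathbf i}$ (possibly negative) with $\sum p_{\mathbf i}=1$; $f(x)=\sum_{\mathbf i}p_{\mathbf i}f_{i_1}(x_1)\cdots f_{i_M}(x_M)$ on $[0,\infty)^M$ is an MMEam density if $f\ge0$. For a random variable $Y$ with distribution function $H_Y$, $\mathrm{V@R}_\theta(Y)=\inf\{y:H_Y(y)\ge\theta\}$.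 *)

theory Defs
  imports "HOL-Probability.Probability" "HOL-Library.FuncSet" "Jordan_Normal_Form.Char_Poly"
begin

definition mexp :: "real mat \<Rightarrow> real \<Rightarrow> real mat" where
  "mexp T x = mat (dim_row T) (dim_col T)
      (\<lambda>(i,j). \<Sum>k. (x ^ k / fact k) * ((T ^\<^sub>m k) $$ (i,j)))"

definition minv :: "real mat \<Rightarrow> real mat" where
  "minv A = (SOME B. inverts_mat A B \<and> inverts_mat B A)"

definition ME_triple :: "real vec \<Rightarrow> real mat \<Rightarrow> real vec \<Rightarrow> bool" where
  "ME_triple \<alpha> T t \<longleftrightarrow>
     T \<in> carrier_mat (dim_vec \<alpha>) (dim_vec \<alpha>) \<and> dim_vec t = dim_vec \<alpha> \<and>
     (\<forall>\<nu>::complex. eigenvalue (map_mat complex_of_real T) \<nu> \<longrightarrow> Re \<nu> < 0)"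

definition me_fun :: "real vec \<Rightarrow> real mat \<Rightarrow> real vec \<Rightarrow> real \<Rightarrow> real" where
  "me_fun \<alpha> T t x = \<alpha> \<bullet> (mexp T x *\<^sub>v t)"

definition ME_density :: "real vec \<Rightarrow> real mat \<Rightarrow> real vec \<Rightarrow> bool" where
  "ME_density \<alpha> T t \<longleftrightarrow> ME_triple \<alpha> T t \<and>
     (\<forall>x\<ge>0. me_fun \<alpha> T t x \<ge> 0) \<and>
     ((\<lambda>x. me_fun \<alpha> T t x) has_integral 1) {0..}"

definition me_l :: "real mat \<Rightarrow> real vec \<Rightarrow> real vec" where
  "me_l T t = minv (- T) *\<^sub>v t"

definition me_surv :: "real vec \<Rightarrow> real mat \<Rightarrow> real vec \<Rightarrow> real \<Rightarrow> real" where
  "me_surv \<alpha> T t x = \<alpha> \<bullet> (mexp T x *\<^sub>v me_l T t)"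

definition alphaRL :: "real vec \<Rightarrow> real mat \<Rightarrow> real vec \<Rightarrow> real \<Rightarrow> real vec" where
  "alphaRL \<alpha> T t z = (1 / me_surv \<alpha> T t z) \<cdot>\<^sub>v (transpose_mat (mexp T z) *\<^sub>v \<alpha>)"

definition idx_set :: "nat \<Rightarrow> nat \<Rightarrow> (nat \<Rightarrow> nat) set" where
  "idx_set L M = {..<M} \<rightarrow>\<^sub>E {..<L}"

definition mmeam_fun :: "nat \<Rightarrow> nat \<Rightarrow> ((nat \<Rightarrow> nat) \<Rightarrow> real) \<Rightarrow> (nat \<Rightarrow> real vec)
     \<Rightarrow> (nat \<Rightarrow> real mat) \<Rightarrow> (nat \<Rightarrow> real vec) \<Rightarrow> (nat \<Rightarrow> real) \<Rightarrow> real" where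
  "mmeam_fun L M p \<alpha> T t x =
     (if \<forall>k<M. 0 \<le> x k then
        (\<Sum>i\<in>idx_set L M. p i * (\<Prod>k<M. me_fun (\<alpha> (i k)) (T (i k)) (t (i k)) (x k)))
      else 0)"

definition pRL :: "nat \<Rightarrow> nat \<Rightarrow> ((nat \<Rightarrow> nat) \<Rightarrow> real) \<Rightarrow> (nat \<Rightarrow> real vec)
     \<Rightarrow> (nat \<Rightarrow> real mat) \<Rightarrow> (nat \<Rightarrow> real vec) \<Rightarrow> (nat \<Rightarrow> real) \<Rightarrow> (nat \<Rightarrow> nat) \<Rightarrow> real" where
  "pRL L M p \<alpha> T t z i =
     p i * (\<Prod>k<M. me_surv (\<alpha> (i k)) (T (i k)) (t (i k)) (z k)) /
     (\<Sum>h\<in>idx_set L M. p h * (\<Prod>k<M. me_surv (\<alpha> (h k)) (T (h k)) (t (h k)) (z k)))"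

definition dist_fun :: "'a measure \<Rightarrow> ('a \<Rightarrow> real) \<Rightarrow> real \<Rightarrow> real" where
  "dist_fun P Y y = measure P {\<omega> \<in> space P. Y \<omega> \<le> y}"

(* V@R_theta(Y) = inf {y : H_Y(y) >= theta} for a NONNEGATIVE random variable Y:
   the infimum is taken over y >= 0.  For theta > 0 this agrees with the plain
   infimum (H_Y(y) = 0 for y < 0); for theta = 0 it yields 0, the left end of the
   support, instead of -oo. *)
definition VaR :: "'a measure \<Rightarrow> ('a \<Rightarrow> real) \<Rightarrow> real \<Rightarrow> real" where
  "VaR P Y \<theta> = Inf {y. 0 \<le> y \<and> \<theta> \<le> dist_fun P Y y}"

definition cond_exp_event :: "'a measure \<Rightarrow> ('a \<Rightarrow> real) \<Rightarrow> 'a set \<Rightarrow> real" where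
  "cond_exp_event P Y A = (\<integral>\<omega>. indicator A \<omega> * Y \<omega> \<partial>P) / measure P A"

end

theory Submission
  imports Defs "Jordan_Normal_Form.Spectral_Radius"
begin


lemma mexp_carrier[simp]: "T \<in> carrier_mat n n \<Longrightarrow> mexp T x \<in> carrier_mat n n"
  unfolding mexp_def by auto

lemma mexp_index: "T \<in> carrier_mat n n \<Longrightarrow> i < n \<Longrightarrow> j < n \<Longrightarrow>
  mexp T x $$ (i,j) = (\<Sum>k. (x ^ k / fact k) * ((T ^\<^sub>m k) $$ (i,j)))"
  unfolding mexp_def by auto

lemma pow_entry_bound:
  fixes T :: "real mat"
  assumes T: "T \<in> carrier_mat n n" and c: "0 \<le> c"
    and b: "\<And>i j. i < n \<Longrightarrow> j < n \<Longrightarrow> \<bar>T $$ (i,j)\<bar> \<le> c"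
  shows "i < n \<Longrightarrow> j < n \<Longrightarrow> \<bar>(T ^\<^sub>m k) $$ (i,j)\<bar> \<le> (real n * c) ^ k"
proof (induction k arbitrary: i j)
  case 0
  then show ?case using T by auto
next
  case (Suc k)
  have "(T ^\<^sub>m Suc k) $$ (i,j) = (\<Sum>l<n. (T ^\<^sub>m k) $$ (i,l) * T $$ (l,j))"
    using Suc.prems T by (simp add: scalar_prod_def row_def col_def atLeast0LessThan)
  also have "\<bar>\<dots>\<bar> \<le> (\<Sum>l<n. \<bar>(T ^\<^sub>m k) $$ (i,l) * T $$ (l,j)\<bar>)" by (rule sum_abs)
  also have "\<dots> \<le> (\<Sum>l<n. (real n * c) ^ k * c)"
    apply (rule sum_mono)
    unfolding abs_mult
    apply (rule mult_mono)
    using Suc b c by auto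
  also have "\<dots> = (real n * c) ^ Suc k" by simp
  finally show ?case .
qed

lemma exists_entry_bound:
  fixes T :: "real mat"
  shows "\<exists>c\<ge>0. \<forall>i<n. \<forall>j<n. \<bar>T $$ (i,j)\<bar> \<le> c"
proof (intro exI[of _ "\<Sum>i<n. \<Sum>j<n. \<bar>T $$ (i,j)\<bar>"] conjI allI impI)
  fix i j assume "i < n" "j < n"
  have "\<bar>T $$ (i,j)\<bar> \<le> (\<Sum>j<n. \<bar>T $$ (i,j)\<bar>)"
    using \<open>j < n\<close> by (intro member_le_sum) auto
  also have "\<dots> \<le> (\<Sum>i<n. \<Sum>j<n. \<bar>T $$ (i,j)\<bar>)"
    using \<open>i < n\<close> by (intro member_le_sum[where f = "\<lambda>i. \<Sum>j<n. \<bar>T $$ (i,j)\<bar>"]) (auto intro: sum_nonneg)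
  finally show "\<bar>T $$ (i,j)\<bar> \<le> (\<Sum>i<n. \<Sum>j<n. \<bar>T $$ (i,j)\<bar>)" .
qed (auto intro: sum_nonneg)

lemma exp_series_summable: "summable (\<lambda>k. \<bar>x\<bar> ^ k / fact k * R ^ k :: real)"
proof -
  have "summable (\<lambda>k. (\<bar>x\<bar> * R) ^ k /\<^sub>R fact k)" by (rule summable_exp_generic)
  then show ?thesis by (simp add: power_mult_distrib field_simps)
qed

lemma pow_series_summable:
  fixes T :: "real mat"
  assumes T: "T \<in> carrier_mat n n" and i: "i < n" and j: "j < n"
  shows "summable (\<lambda>k. (x ^ k / fact k) * ((T ^\<^sub>m k) $$ (i,j)))"
proof -
  obtain c where c: "0 \<le> c" "\<forall>i<n. \<forall>j<n. \<bar>T $$ (i,j)\<bar> \<le> c" using exists_entry_bound by blast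
  show ?thesis
  proof (rule summable_comparison_test[OF _ exp_series_summable[of x "real n * c"]])
    show "\<exists>N. \<forall>k\<ge>N. norm (x ^ k / fact k * (T ^\<^sub>m k) $$ (i, j)) \<le> \<bar>x\<bar> ^ k / fact k * (real n * c) ^ k"
      using pow_entry_bound[OF T c(1) _ i j] c(2)
      by (auto simp: abs_mult power_abs intro!: divide_right_mono mult_left_mono)
  qed
qed


definition hh :: "real vec \<Rightarrow> real mat \<Rightarrow> real vec \<Rightarrow> real \<Rightarrow> real" where
  "hh \<alpha> T w x = \<alpha> \<bullet> (mexp T x *\<^sub>v w)"

definition co :: "real vec \<Rightarrow> real mat \<Rightarrow> real vec \<Rightarrow> nat \<Rightarrow> real" where
  "co \<alpha> T w k = \<alpha> \<bullet> ((T ^\<^sub>m k) *\<^sub>v w)"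

lemma sprod_mat_vec:
  fixes A :: "real mat"
  assumes "A \<in> carrier_mat n n" "dim_vec \<alpha> = n" "dim_vec w = n"
  shows "\<alpha> \<bullet> (A *\<^sub>v w) = (\<Sum>i<n. \<Sum>j<n. \<alpha> $ i * A $$ (i,j) * w $ j)"
  using assms by (simp add: scalar_prod_def row_def atLeast0LessThan sum_distrib_left mult.assoc)

lemma hh_sums:
  assumes T: "T \<in> carrier_mat n n" and a: "dim_vec \<alpha> = n" and w: "dim_vec w = n"
  shows "(\<lambda>k. co \<alpha> T w k / fact k * x ^ k) sums hh \<alpha> T w x"
proof -
  have s1: "(\<lambda>k. \<alpha> $ i * ((x ^ k / fact k) * ((T ^\<^sub>m k) $$ (i,j))) * w $ j) sums (\<alpha> $ i * mexp T x $$ (i,j) * w $ j)"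
    if "i < n" "j < n" for i j
    using sums_mult2[OF sums_mult[OF summable_sums[OF pow_series_summable[OF T that, of x]]]]
    unfolding mexp_index[OF T that] by blast
  have "(\<lambda>k. \<Sum>i<n. \<Sum>j<n. \<alpha> $ i * ((x ^ k / fact k) * ((T ^\<^sub>m k) $$ (i,j))) * w $ j) sums
        (\<Sum>i<n. \<Sum>j<n. \<alpha> $ i * mexp T x $$ (i,j) * w $ j)"
    by (intro sums_sum s1) auto
  moreover have "(\<Sum>i<n. \<Sum>j<n. \<alpha> $ i * ((x ^ k / fact k) * ((T ^\<^sub>m k) $$ (i,j))) * w $ j)
     = co \<alpha> T w k / fact k * x ^ k" for k
  proof -
    have "(\<Sum>i<n. \<Sum>j<n. \<alpha> $ i * ((x ^ k / fact k) * ((T ^\<^sub>m k) $$ (i,j))) * w $ j)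
      = (x ^ k / fact k) * (\<Sum>i<n. \<Sum>j<n. \<alpha> $ i * (T ^\<^sub>m k) $$ (i,j) * w $ j)"
      by (simp add: sum_distrib_left mult_ac)
    then show ?thesis
      unfolding co_def sprod_mat_vec[OF pow_carrier_mat[OF T] a w] by simp
  qed
  moreover have "hh \<alpha> T w x = (\<Sum>i<n. \<Sum>j<n. \<alpha> $ i * mexp T x $$ (i,j) * w $ j)"
    unfolding hh_def by (rule sprod_mat_vec[OF mexp_carrier[OF T] a w])
  ultimately show ?thesis by simp
qed

lemma co_bound:
  assumes T: "T \<in> carrier_mat n n" and a: "dim_vec \<alpha> = n" and w: "dim_vec w = n"
  shows "\<exists>K R. \<forall>k. \<bar>co \<alpha> T w k\<bar> \<le> K * R ^ k"
proof -
  obtain c where c: "0 \<le> c" "\<forall>i<n. \<forall>j<n. \<bar>T $$ (i,j)\<bar> \<le> c" using exists_entry_bound by blast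
  define K where "K = (\<Sum>i<n. \<Sum>j<n. \<bar>\<alpha> $ i\<bar> * \<bar>w $ j\<bar>)"
  have "\<bar>co \<alpha> T w k\<bar> \<le> K * (real n * c) ^ k" for k
  proof -
    have "\<bar>co \<alpha> T w k\<bar> = \<bar>\<Sum>i<n. \<Sum>j<n. \<alpha> $ i * (T ^\<^sub>m k) $$ (i,j) * w $ j\<bar>"
      unfolding co_def sprod_mat_vec[OF pow_carrier_mat[OF T] a w] ..
    also have "\<dots> \<le> (\<Sum>i<n. \<bar>\<Sum>j<n. \<alpha> $ i * (T ^\<^sub>m k) $$ (i,j) * w $ j\<bar>)" by (rule sum_abs)
    also have "\<dots> \<le> (\<Sum>i<n. \<Sum>j<n. \<bar>\<alpha> $ i * (T ^\<^sub>m k) $$ (i,j) * w $ j\<bar>)"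
      by (intro sum_mono sum_abs)
    also have "\<dots> \<le> (\<Sum>i<n. \<Sum>j<n. \<bar>\<alpha> $ i\<bar> * \<bar>w $ j\<bar> * (real n * c) ^ k)"
    proof (intro sum_mono)
      fix i j assume "i \<in> {..<n}" "j \<in> {..<n}"
      then have "\<bar>(T ^\<^sub>m k) $$ (i,j)\<bar> \<le> (real n * c) ^ k" using pow_entry_bound[OF T c(1)] c(2) by auto
      then show "\<bar>\<alpha> $ i * (T ^\<^sub>m k) $$ (i,j) * w $ j\<bar> \<le> \<bar>\<alpha> $ i\<bar> * \<bar>w $ j\<bar> * (real n * c) ^ k"
        by (simp add: abs_mult mult_left_mono mult_right_mono mult_ac)
    qed
    also have "\<dots> = K * (real n * c) ^ k" unfolding K_def by (simp add: sum_distrib_right)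
    finally show ?thesis .
  qed
  then show ?thesis by blast
qed

lemma hh_deriv:
  assumes T: "T \<in> carrier_mat n n" and a: "dim_vec \<alpha> = n" and w: "dim_vec w = n"
  shows "((\<lambda>x. hh \<alpha> T w x) has_real_derivative hh \<alpha> T (T *\<^sub>v w) x) (at x)"
proof -
  define c where "c = (\<lambda>k. co \<alpha> T w k / fact k)"
  obtain K R where KR: "\<forall>k. \<bar>co \<alpha> T w k\<bar> \<le> K * R ^ k" using co_bound[OF T a w] by blast
  have sm: "summable (\<lambda>k. c k * y ^ k)" for y :: real
  proof (rule summable_comparison_test[OF _ summable_mult[OF exp_series_summable[of y "\<bar>R\<bar>"], of "\<bar>K\<bar>"]])
    show "\<exists>N. \<forall>k\<ge>N. norm (c k * y ^ k) \<le> \<bar>K\<bar> * (\<bar>y\<bar> ^ k / fact k * \<bar>R\<bar> ^ k)"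
    proof (intro exI allI impI)
      fix k
      have "K * R ^ k \<le> \<bar>K * R ^ k\<bar>" by (rule abs_ge_self)
      also have "\<bar>K * R ^ k\<bar> = \<bar>K\<bar> * \<bar>R\<bar> ^ k" by (simp add: abs_mult power_abs)
      finally have b: "\<bar>co \<alpha> T w k\<bar> \<le> \<bar>K\<bar> * \<bar>R\<bar> ^ k"
        using KR[rule_format, of k] by linarith
      have "norm (c k * y ^ k) = \<bar>co \<alpha> T w k\<bar> * \<bar>y\<bar> ^ k / fact k"
        unfolding c_def real_norm_def abs_mult abs_divide power_abs by simp
      also have "\<dots> \<le> \<bar>K\<bar> * \<bar>R\<bar> ^ k * \<bar>y\<bar> ^ k / fact k"
        by (intro divide_right_mono mult_right_mono b) auto
      finally show "norm (c k * y ^ k) \<le> \<bar>K\<bar> * (\<bar>y\<bar> ^ k / fact k * \<bar>R\<bar> ^ k)"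
        by (simp add: mult_ac)
    qed
  qed
  have hh_eq: "hh \<alpha> T w y = (\<Sum>k. c k * y ^ k)" for y
    using sums_unique[OF hh_sums[OF T a w, of y]] unfolding c_def by simp
  have Tw: "dim_vec (T *\<^sub>v w) = n" using T by simp
  have "diffs c k = co \<alpha> T (T *\<^sub>v w) k / fact k" for k
  proof -
    have "co \<alpha> T w (Suc k) = co \<alpha> T (T *\<^sub>v w) k"
    proof -
      have wc: "w \<in> carrier_vec n" by (rule carrier_vecI[OF w])
      have "(T ^\<^sub>m k * T) *\<^sub>v w = T ^\<^sub>m k *\<^sub>v (T *\<^sub>v w)"
        by (rule assoc_mult_mat_vec[OF pow_carrier_mat[OF T] T wc])
      then show ?thesis unfolding co_def by (simp only: pow_mat.simps)
    qed
    moreover have "of_nat (Suc k) * (X / fact (Suc k)) = X / fact k" for X :: real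
    proof -
      have a: "real (Suc k) \<noteq> 0" by simp
      have "of_nat (Suc k) * (X / fact (Suc k)) = (real (Suc k) * X) / (real (Suc k) * fact k)"
        unfolding fact_Suc by simp
      also have "\<dots> = X / fact k" by (rule nonzero_mult_divide_mult_cancel_left[OF a])
      finally show ?thesis .
    qed
    ultimately show ?thesis unfolding diffs_def c_def by simp
  qed
  then have "(\<Sum>k. diffs c k * x ^ k) = hh \<alpha> T (T *\<^sub>v w) x"
    using sums_unique[OF hh_sums[OF T a Tw, of x]] by simp
  then show ?thesis
    using termdiffs_strong_converges_everywhere[of c x, OF sm] unfolding hh_eq[abs_def] by simp
qed


lemma mult_entry:
  fixes A B :: "'b :: comm_ring_1 mat"
  assumes "A \<in> carrier_mat n n" "B \<in> carrier_mat n n" "i < n" "j < n"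
  shows "(A * B) $$ (i,j) = (\<Sum>l<n. A $$ (i,l) * B $$ (l,j))"
  using assms by (simp add: scalar_prod_def row_def col_def atLeast0LessThan)

lemma pascal_sum:
  fixes X :: "nat \<Rightarrow> real"
  shows "(\<Sum>m\<le>k. of_nat (k choose m) * r ^ m * X (Suc k - m)) + r * (\<Sum>m\<le>k. of_nat (k choose m) * r ^ m * X (k - m))
     = (\<Sum>m\<le>Suc k. of_nat (Suc k choose m) * r ^ m * X (Suc k - m))"
proof -
  define g where "g m = of_nat (k choose m) * r ^ m * X (Suc k - m)" for m
  have A: "(\<Sum>m\<le>Suc k. g m) = g 0 + (\<Sum>m\<le>k. g (Suc m))" by (rule sum.atMost_Suc_shift)
  have B: "(\<Sum>m\<le>Suc k. g m) = (\<Sum>m\<le>k. g m)" by (simp add: g_def)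
  have C: "(\<Sum>m\<le>Suc k. of_nat (Suc k choose m) * r ^ m * X (Suc k - m))
     = X (Suc k) + (\<Sum>m\<le>k. of_nat (Suc k choose Suc m) * r ^ Suc m * X (k - m))"
    by (subst sum.atMost_Suc_shift) simp
  have D: "(\<Sum>m\<le>k. of_nat (Suc k choose Suc m) * r ^ Suc m * X (k - m))
     = r * (\<Sum>m\<le>k. of_nat (k choose m) * r ^ m * X (k - m)) + (\<Sum>m\<le>k. g (Suc m))"
  proof -
    have e: "of_nat (Suc k choose Suc m) * r ^ Suc m * X (k - m) = r * (of_nat (k choose m) * r ^ m * X (k - m)) + g (Suc m)" for m
      unfolding g_def by (simp add: algebra_simps)
    show ?thesis unfolding e sum.distrib sum_distrib_left ..
  qed
  show ?thesis using A B C D by (simp add: g_def)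
qed

lemma pow_shift_entry:
  fixes N :: "real mat"
  assumes N: "N \<in> carrier_mat n n"
  shows "i < n \<Longrightarrow> j < n \<Longrightarrow> ((N + r \<cdot>\<^sub>m 1\<^sub>m n) ^\<^sub>m k) $$ (i,j)
     = (\<Sum>m\<le>k. of_nat (k choose m) * r ^ m * (N ^\<^sub>m (k - m)) $$ (i,j))"
proof (induction k arbitrary: i j)
  case 0
  then show ?case using N by simp
next
  case (Suc k)
  define A where "A = N + r \<cdot>\<^sub>m 1\<^sub>m n"
  have A: "A \<in> carrier_mat n n" unfolding A_def using N by simp
  have "(A ^\<^sub>m Suc k) $$ (i,j) = (\<Sum>l<n. (A ^\<^sub>m k) $$ (i,l) * A $$ (l,j))"
    using mult_entry[OF pow_carrier_mat[OF A] A Suc.prems] by simp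
  also have "\<dots> = (\<Sum>l<n. (A ^\<^sub>m k) $$ (i,l) * N $$ (l,j)) + r * (A ^\<^sub>m k) $$ (i,j)"
  proof -
    have "(\<Sum>l<n. (A ^\<^sub>m k) $$ (i,l) * A $$ (l,j))
       = (\<Sum>l<n. (A ^\<^sub>m k) $$ (i,l) * N $$ (l,j) + (if l = j then r * (A ^\<^sub>m k) $$ (i,l) else 0))"
      using N Suc.prems by (intro sum.cong) (auto simp: A_def algebra_simps)
    also have "\<dots> = (\<Sum>l<n. (A ^\<^sub>m k) $$ (i,l) * N $$ (l,j)) + r * (A ^\<^sub>m k) $$ (i,j)"
      using Suc.prems by (simp add: sum.distrib)
    finally show ?thesis .
  qed
  also have "(\<Sum>l<n. (A ^\<^sub>m k) $$ (i,l) * N $$ (l,j))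
     = (\<Sum>m\<le>k. of_nat (k choose m) * r ^ m * (N ^\<^sub>m (Suc k - m)) $$ (i,j))"
  proof -
    have "(\<Sum>l<n. (A ^\<^sub>m k) $$ (i,l) * N $$ (l,j))
       = (\<Sum>l<n. \<Sum>m\<le>k. of_nat (k choose m) * r ^ m * ((N ^\<^sub>m (k - m)) $$ (i,l) * N $$ (l,j)))"
      using Suc.IH[OF Suc.prems(1)] unfolding A_def
      by (intro sum.cong refl) (simp add: sum_distrib_right sum_distrib_left mult_ac)
    also have "\<dots> = (\<Sum>m\<le>k. of_nat (k choose m) * r ^ m * (\<Sum>l<n. (N ^\<^sub>m (k - m)) $$ (i,l) * N $$ (l,j)))"
      by (subst sum.swap) (simp add: sum_distrib_left)
    also have "\<dots> = (\<Sum>m\<le>k. of_nat (k choose m) * r ^ m * (N ^\<^sub>m (Suc k - m)) $$ (i,j))"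
    proof (intro sum.cong refl)
      fix m assume "m \<in> {..k}"
      then have "Suc k - m = Suc (k - m)" by auto
      then have "(N ^\<^sub>m (Suc k - m)) $$ (i,j) = (\<Sum>l<n. (N ^\<^sub>m (k - m)) $$ (i,l) * N $$ (l,j))"
        using mult_entry[OF pow_carrier_mat[OF N] N Suc.prems] by simp
      then show "of_nat (k choose m) * r ^ m * (\<Sum>l<n. (N ^\<^sub>m (k - m)) $$ (i,l) * N $$ (l,j))
        = of_nat (k choose m) * r ^ m * (N ^\<^sub>m (Suc k - m)) $$ (i,j)" by simp
    qed
    finally show ?thesis .
  qed
  also have "(A ^\<^sub>m k) $$ (i,j) = (\<Sum>m\<le>k. of_nat (k choose m) * r ^ m * (N ^\<^sub>m (k - m)) $$ (i,j))"
    using Suc.IH[OF Suc.prems] unfolding A_def .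
  also note pascal_sum[of k r "\<lambda>m. (N ^\<^sub>m m) $$ (i,j)"]
  finally show ?case unfolding A_def .
qed

lemma pow_series_abs_summable:
  fixes T :: "real mat"
  assumes T: "T \<in> carrier_mat n n" and i: "i < n" and j: "j < n"
  shows "summable (\<lambda>k. norm ((x ^ k / fact k) * ((T ^\<^sub>m k) $$ (i,j))))"
proof -
  obtain c where c: "0 \<le> c" "\<forall>i<n. \<forall>j<n. \<bar>T $$ (i,j)\<bar> \<le> c" using exists_entry_bound by blast
  show ?thesis
  proof (rule summable_comparison_test[OF _ exp_series_summable[of x "real n * c"]])
    show "\<exists>N. \<forall>k\<ge>N. norm (norm (x ^ k / fact k * (T ^\<^sub>m k) $$ (i, j))) \<le> \<bar>x\<bar> ^ k / fact k * (real n * c) ^ k"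
      using pow_entry_bound[OF T c(1) _ i j] c(2)
      by (auto simp: abs_mult power_abs intro!: divide_right_mono mult_left_mono)
  qed
qed

lemma mexp_shift:
  fixes N :: "real mat"
  assumes N: "N \<in> carrier_mat n n" and i: "i < n" and j: "j < n"
  shows "mexp (N + r \<cdot>\<^sub>m 1\<^sub>m n) x $$ (i,j) = exp (r * x) * mexp N x $$ (i,j)"
proof -
  have NA: "N + r \<cdot>\<^sub>m 1\<^sub>m n \<in> carrier_mat n n" using N by simp
  define a where "a m = (r * x) ^ m / fact m" for m
  define b where "b m = (x ^ m / fact m) * ((N ^\<^sub>m m) $$ (i,j))" for m
  have ea: "exp (r * x) = (\<Sum>m. a m)"
    using sums_unique[OF exp_converges[of "r * x"]] unfolding a_def by (simp add: divide_inverse mult_ac)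
  have sa: "summable (\<lambda>m. norm (a m))"
    using exp_series_summable[of "r * x" 1] unfolding a_def by (simp add: abs_mult power_abs)
  have sb: "summable (\<lambda>m. norm (b m))" unfolding b_def by (rule pow_series_abs_summable[OF N i j])
  have "exp (r * x) * mexp N x $$ (i,j) = (\<Sum>m. a m) * (\<Sum>m. b m)"
    unfolding ea mexp_index[OF N i j] b_def ..
  also have "\<dots> = (\<Sum>k. \<Sum>m\<le>k. a m * b (k - m))" by (rule Cauchy_product[OF sa sb])
  also have "\<dots> = (\<Sum>k. (x ^ k / fact k) * (((N + r \<cdot>\<^sub>m 1\<^sub>m n) ^\<^sub>m k) $$ (i,j)))"
  proof (intro suminf_cong)
    fix k
    have "(\<Sum>m\<le>k. a m * b (k - m)) = (\<Sum>m\<le>k. (x ^ k / fact k) * (of_nat (k choose m) * r ^ m * (N ^\<^sub>m (k - m)) $$ (i,j)))"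
    proof (intro sum.cong refl)
      fix m assume "m \<in> {..k}"
      then have mk: "m \<le> k" by simp
      have xk: "x ^ k = x ^ m * x ^ (k - m)" using mk by (simp add: power_add[symmetric])
      show "a m * b (k - m) = (x ^ k / fact k) * (of_nat (k choose m) * r ^ m * (N ^\<^sub>m (k - m)) $$ (i,j))"
        unfolding a_def b_def binomial_fact[OF mk] xk by (simp add: power_mult_distrib field_simps)
    qed
    also have "\<dots> = (x ^ k / fact k) * (((N + r \<cdot>\<^sub>m 1\<^sub>m n) ^\<^sub>m k) $$ (i,j))"
      unfolding pow_shift_entry[OF N i j] by (simp add: sum_distrib_left)
    finally show "(\<Sum>m\<le>k. a m * b (k - m)) = (x ^ k / fact k) * (((N + r \<cdot>\<^sub>m 1\<^sub>m n) ^\<^sub>m k) $$ (i,j))" .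
  qed
  also have "\<dots> = mexp (N + r \<cdot>\<^sub>m 1\<^sub>m n) x $$ (i,j)" unfolding mexp_index[OF NA i j] ..
  finally show ?thesis ..
qed


lemma pow_smult_mat:
  fixes A :: "'b :: comm_ring_1 mat"
  assumes A: "A \<in> carrier_mat n n"
  shows "(a \<cdot>\<^sub>m A) ^\<^sub>m k = a ^ k \<cdot>\<^sub>m (A ^\<^sub>m k)"
proof (induction k)
  case 0
  then show ?case using A by (intro eq_matI) auto
next
  case (Suc k)
  have "(a \<cdot>\<^sub>m A) ^\<^sub>m Suc k = (a ^ k \<cdot>\<^sub>m (A ^\<^sub>m k)) * (a \<cdot>\<^sub>m A)" by (simp only: pow_mat.simps Suc.IH)
  also have "\<dots> = a ^ k \<cdot>\<^sub>m ((A ^\<^sub>m k) * (a \<cdot>\<^sub>m A))"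
    by (rule mult_smult_assoc_mat[OF pow_carrier_mat[OF A] smult_carrier_mat[OF A]])
  also have "(A ^\<^sub>m k) * (a \<cdot>\<^sub>m A) = a \<cdot>\<^sub>m ((A ^\<^sub>m k) * A)"
    by (rule mult_smult_distrib[OF pow_carrier_mat[OF A] A])
  also have "a ^ k \<cdot>\<^sub>m (a \<cdot>\<^sub>m ((A ^\<^sub>m k) * A)) = a ^ Suc k \<cdot>\<^sub>m (A ^\<^sub>m Suc k)"
    by (intro eq_matI) (auto simp: mult_ac)
  finally show ?case .
qed

lemma mv_entry:
  fixes A :: "'b :: comm_ring_1 mat"
  assumes "A \<in> carrier_mat n n" "dim_vec v = n" "i < n"
  shows "(A *\<^sub>v v) $ i = (\<Sum>j<n. A $$ (i,j) * v $ j)"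
  using assms by (simp add: scalar_prod_def row_def atLeast0LessThan)

lemma eps_exists:
  fixes LL :: "complex set"
  assumes "finite LL" "\<forall>l\<in>LL. Re l < 0"
  shows "\<exists>\<epsilon>>0. \<forall>l\<in>LL. Re l + \<epsilon> < 0"
proof (cases "LL = {}")
  case True
  then show ?thesis by (intro exI[of _ 1]) auto
next
  case False
  define m where "m = Max (Re ` LL)"
  have "m \<in> Re ` LL" unfolding m_def using assms False by (intro Max_in) auto
  then have m0: "m < 0" using assms by auto
  have "Re l \<le> m" if "l \<in> LL" for l unfolding m_def using assms that by (intro Max_ge) auto
  then show ?thesis using m0 by (intro exI[of _ "- m / 2"]) force
qed

lemma mexp_decay:
  fixes T :: "real mat"
  assumes T: "T \<in> carrier_mat n n"
    and ev: "\<forall>\<nu>::complex. eigenvalue (map_mat complex_of_real T) \<nu> \<longrightarrow> Re \<nu> < 0"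
  shows "\<exists>\<epsilon>>0. \<exists>C. \<forall>x\<ge>0. \<forall>i<n. \<forall>j<n. \<bar>mexp T x $$ (i,j)\<bar> \<le> C * exp (- \<epsilon> * x)"
proof (cases "n = 0")
  case True
  then show ?thesis by (intro exI[of _ 1]) auto
next
  case False
  then have n0: "n > 0" by simp
  define Tc where "Tc = map_mat complex_of_real T"
  have Tc: "Tc \<in> carrier_mat n n" using T unfolding Tc_def by simp
  define LL where "LL = spectrum Tc"
  have finL: "finite LL" unfolding LL_def using card_finite_spectrum[OF Tc] by simp
  have negL: "\<forall>l\<in>LL. Re l < 0" using ev unfolding LL_def spectrum_def Tc_def by auto
  obtain \<epsilon> where \<epsilon>: "\<epsilon> > 0" "\<forall>l\<in>LL. Re l + \<epsilon> < 0" using eps_exists[OF finL negL] by blast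
  define q where "q l = (cmod (l + of_real \<epsilon>))\<^sup>2 / (- 2 * (Re l + \<epsilon>))" for l
  define s where "s = 1 + (\<Sum>l\<in>LL. q l)"
  have q0: "q l \<ge> 0" if "l \<in> LL" for l using \<epsilon>(2) that unfolding q_def by (auto intro!: divide_nonneg_pos)
  have qs: "q l < s" if "l \<in> LL" for l
  proof -
    have "q l \<le> (\<Sum>l\<in>LL. q l)" using that finL q0 by (intro member_le_sum) auto
    then show ?thesis unfolding s_def by simp
  qed
  have s0: "s > 0" unfolding s_def using q0 by (smt (verit) sum_nonneg)
  define N where "N = T + (s + \<epsilon>) \<cdot>\<^sub>m 1\<^sub>m n"
  define B where "B = (1 / s) \<cdot>\<^sub>m N"
  have N: "N \<in> carrier_mat n n" unfolding N_def using T by simp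
  have B: "B \<in> carrier_mat n n" unfolding B_def using N by simp
  define Bc where "Bc = map_mat complex_of_real B"
  have Bc: "Bc \<in> carrier_mat n n" unfolding Bc_def using B by simp
  have evB: "cmod \<mu> < 1" if evmu: "eigenvalue Bc \<mu>" for \<mu>
  proof -
    obtain v where v: "eigenvector Bc v \<mu>" using evmu unfolding eigenvalue_def by blast
    then have vc: "v \<in> carrier_vec n" and v0: "v \<noteq> 0\<^sub>v n" and vB: "Bc *\<^sub>v v = \<mu> \<cdot>\<^sub>v v"
      unfolding eigenvector_def using Bc by auto
    have dv: "dim_vec v = n" using vc by simp
    define l where "l = of_real s * \<mu> - of_real s - of_real \<epsilon>"
    have "Tc *\<^sub>v v = l \<cdot>\<^sub>v v"
    proof (rule eq_vecI)
      show "dim_vec (Tc *\<^sub>v v) = dim_vec (l \<cdot>\<^sub>v v)" using Tc dv by simp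
      fix i assume "i < dim_vec (l \<cdot>\<^sub>v v)"
      then have i: "i < n" using dv by simp
      have "\<mu> * v $ i = (Bc *\<^sub>v v) $ i" using vB i dv by simp
      also have "\<dots> = (\<Sum>j<n. Bc $$ (i,j) * v $ j)" by (rule mv_entry[OF Bc dv i])
      also have "\<dots> = (\<Sum>j<n. of_real (1/s) * (Tc $$ (i,j) * v $ j) + (if j = i then of_real ((s + \<epsilon>)/s) * v $ j else 0))"
        using i T s0 by (intro sum.cong refl) (auto simp: Bc_def B_def N_def Tc_def field_simps)
      also have "\<dots> = of_real (1/s) * (\<Sum>j<n. Tc $$ (i,j) * v $ j) + of_real ((s + \<epsilon>)/s) * v $ i"
        using i by (simp add: sum.distrib sum_distrib_left)
      also have "(\<Sum>j<n. Tc $$ (i,j) * v $ j) = (Tc *\<^sub>v v) $ i" by (rule mv_entry[OF Tc dv i, symmetric])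
      finally have "\<mu> * v $ i = of_real (1/s) * (Tc *\<^sub>v v) $ i + of_real ((s + \<epsilon>)/s) * v $ i" .
      then have "(Tc *\<^sub>v v) $ i = of_real s * (\<mu> * v $ i) - of_real (s + \<epsilon>) * v $ i"
        using s0 by (simp add: field_simps)
      then show "(Tc *\<^sub>v v) $ i = (l \<cdot>\<^sub>v v) $ i" using i dv unfolding l_def by (simp add: algebra_simps)
    qed
    then have "eigenvector Tc v l" unfolding eigenvector_def using Tc vc v0 by auto
    then have lL: "l \<in> LL" unfolding LL_def spectrum_def eigenvalue_def by auto
    define a where "a = Re l + \<epsilon>"
    define b where "b = Im l"
    have a0: "a < 0" unfolding a_def using \<epsilon>(2) lL by auto
    have qe: "q l = (a\<^sup>2 + b\<^sup>2) / (- 2 * a)" unfolding q_def a_def b_def cmod_power2 by simp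
    have "(a\<^sup>2 + b\<^sup>2) / (- 2 * a) < s" using qs[OF lL] unfolding qe .
    then have "(a\<^sup>2 + b\<^sup>2) < s * (- 2 * a)"
      by (subst (asm) pos_divide_less_eq) (use a0 in auto)
    then have lt: "(s + a)\<^sup>2 + b\<^sup>2 < s\<^sup>2" by (simp add: power2_eq_square algebra_simps)
    have "of_real s * \<mu> = l + of_real s + of_real \<epsilon>" unfolding l_def by simp
    then have "(cmod (of_real s * \<mu>))\<^sup>2 = (s + a)\<^sup>2 + b\<^sup>2"
      unfolding cmod_power2 a_def b_def by (simp add: add_ac)
    then have "(cmod (of_real s * \<mu>))\<^sup>2 < s\<^sup>2" using lt by simp
    then have "cmod (of_real s * \<mu>) < s" using s0 by (smt (verit) power_mono norm_ge_zero)
    then have "s * cmod \<mu> < s * 1" using s0 by (simp add: norm_mult)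
    then show ?thesis using s0 by simp
  qed
  have "spectral_radius Bc \<in> norm ` spectrum Bc" by (rule spectral_radius_mem_max(1)[OF Bc n0])
  then have "spectral_radius Bc < 1" using evB unfolding spectrum_def by auto
  then obtain c where c: "\<forall>k. norm_bound (Bc ^\<^sub>m k) c"
    using spectral_radius_jnf_norm_bound_less_1_upper_triangular[OF Bc] by blast
  have Bk: "\<bar>(B ^\<^sub>m k) $$ (i,j)\<bar> \<le> c" if "i < n" "j < n" for i j k
  proof -
    have "Bc ^\<^sub>m k = map_mat complex_of_real (B ^\<^sub>m k)"
      unfolding Bc_def by (rule of_real_hom.mat_hom_pow[OF B, symmetric])
    then have "norm (complex_of_real ((B ^\<^sub>m k) $$ (i,j))) \<le> c"
      using c[rule_format, of k] that B unfolding norm_bound_def by auto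
    then show ?thesis by simp
  qed
  have NsB: "N = s \<cdot>\<^sub>m B" unfolding B_def using s0 N by (intro eq_matI) auto
  have Nk: "\<bar>(N ^\<^sub>m k) $$ (i,j)\<bar> \<le> s ^ k * c" if "i < n" "j < n" for i j k
  proof -
    have "(N ^\<^sub>m k) $$ (i,j) = s ^ k * (B ^\<^sub>m k) $$ (i,j)"
      unfolding NsB pow_smult_mat[OF B] using that B by simp
    then show ?thesis using Bk[OF that, of k] s0 by (simp add: abs_mult mult_left_mono)
  qed
  have TN: "T = N + (- (s + \<epsilon>)) \<cdot>\<^sub>m 1\<^sub>m n" unfolding N_def using T by (intro eq_matI) auto
  have main: "\<bar>mexp T x $$ (i,j)\<bar> \<le> c * exp (- \<epsilon> * x)" if x: "x \<ge> 0" and i: "i < n" and j: "j < n" for x i j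
  proof -
    have "mexp T x $$ (i,j) = exp (- (s + \<epsilon>) * x) * mexp N x $$ (i,j)"
      by (subst TN) (rule mexp_shift[OF N i j])
    moreover have "\<bar>mexp N x $$ (i,j)\<bar> \<le> c * exp (s * x)"
    proof -
      have "\<bar>mexp N x $$ (i,j)\<bar> \<le> (\<Sum>k. (s * x) ^ k / fact k * c)"
        unfolding mexp_index[OF N i j] real_norm_def[symmetric]
      proof (rule norm_suminf_le)
        fix k
        show "norm (x ^ k / fact k * (N ^\<^sub>m k) $$ (i, j)) \<le> (s * x) ^ k / fact k * c"
        proof -
          have "norm (x ^ k / fact k * (N ^\<^sub>m k) $$ (i, j)) = x ^ k / fact k * \<bar>(N ^\<^sub>m k) $$ (i, j)\<bar>"
            using x by (simp add: abs_mult)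
          also have "\<dots> \<le> x ^ k / fact k * (s ^ k * c)"
            by (intro mult_left_mono Nk[OF i j]) (use x in auto)
          also have "\<dots> = (s * x) ^ k / fact k * c" by (simp add: power_mult_distrib)
          finally show ?thesis .
        qed
        show "summable (\<lambda>k. (s * x) ^ k / fact k * c)"
        proof (intro summable_mult2)
          show "summable (\<lambda>k. (s * x) ^ k / fact k)"
            using exp_converges[of "s * x"] by (simp add: sums_iff divide_inverse mult_ac)
        qed
      qed
      also have "(\<Sum>k. (s * x) ^ k / fact k * c) = c * exp (s * x)"
        using sums_unique[OF sums_mult2[OF exp_converges[of "s * x"], of c]]
        by (simp add: divide_inverse mult_ac)
      finally show ?thesis .
    qed
    ultimately have "\<bar>mexp T x $$ (i,j)\<bar> \<le> exp (- (s + \<epsilon>) * x) * (c * exp (s * x))"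
      by (simp add: abs_mult mult_left_mono)
    also have "\<dots> = c * exp (- \<epsilon> * x)" by (simp add: exp_add[symmetric] algebra_simps)
    finally show "\<bar>mexp T x $$ (i,j)\<bar> \<le> c * exp (- \<epsilon> * x)" .
  qed
  show ?thesis using main \<epsilon>(1) by blast
qed



lemma ME_triple_dims:
  assumes "ME_triple \<alpha> T t"
  shows "T \<in> carrier_mat (dim_vec \<alpha>) (dim_vec \<alpha>)" "dim_vec t = dim_vec \<alpha>"
  using assms unfolding ME_triple_def by auto

lemma neg_inv:
  assumes tr: "ME_triple \<alpha> T t" and n: "n = dim_vec \<alpha>"
  shows "minv (-T) \<in> carrier_mat n n" "(-T) * minv (-T) = 1\<^sub>m n" "minv (-T) * (-T) = 1\<^sub>m n"
proof -
  have T: "T \<in> carrier_mat n n" using ME_triple_dims[OF tr] n by simp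
  have ev: "\<forall>\<nu>::complex. eigenvalue (map_mat complex_of_real T) \<nu> \<longrightarrow> Re \<nu> < 0"
    using tr unfolding ME_triple_def by auto
  have mT: "-T \<in> carrier_mat n n" using T by simp
  have d: "det (-T) \<noteq> 0"
  proof
    assume "det (-T) = 0"
    then obtain v where v: "v \<in> carrier_vec n" "v \<noteq> 0\<^sub>v n" "(-T) *\<^sub>v v = 0\<^sub>v n"
      using det_0_iff_vec_prod_zero_field[OF mT] by blast
    have dv: "dim_vec v = n" using v(1) by simp
    have Tv: "(T *\<^sub>v v) $ i = 0" if "i < n" for i
    proof -
      have "((-T) *\<^sub>v v) $ i = 0" using v(3) that by simp
      then show ?thesis using that T dv by simp
    qed
    define Tc where "Tc = map_mat complex_of_real T"
    define vc where "vc = map_vec complex_of_real v"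
    have Tc: "Tc \<in> carrier_mat n n" using T unfolding Tc_def by simp
    have dvc: "dim_vec vc = n" unfolding vc_def using dv by simp
    have "Tc *\<^sub>v vc = 0 \<cdot>\<^sub>v vc"
    proof (rule eq_vecI)
      show "dim_vec (Tc *\<^sub>v vc) = dim_vec (0 \<cdot>\<^sub>v vc)" using Tc dvc by simp
      fix i assume "i < dim_vec (0 \<cdot>\<^sub>v vc)"
      then have i: "i < n" using dvc by simp
      have "(Tc *\<^sub>v vc) $ i = (\<Sum>j<n. Tc $$ (i,j) * vc $ j)" by (rule mv_entry[OF Tc dvc i])
      also have "\<dots> = complex_of_real (\<Sum>j<n. T $$ (i,j) * v $ j)"
        unfolding Tc_def vc_def using i T dv by simp
      also have "(\<Sum>j<n. T $$ (i,j) * v $ j) = (T *\<^sub>v v) $ i" by (rule mv_entry[OF T dv i, symmetric])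
      finally show "(Tc *\<^sub>v vc) $ i = (0 \<cdot>\<^sub>v vc) $ i" using Tv[OF i] i dvc by simp
    qed
    moreover have "vc \<noteq> 0\<^sub>v n"
    proof
      assume "vc = 0\<^sub>v n"
      then have "v $ i = 0" if "i < n" for i
        using that arg_cong[OF \<open>vc = 0\<^sub>v n\<close>, of "\<lambda>u. u $ i"] unfolding vc_def using dv by simp
      then have "v = 0\<^sub>v n" using dv by (intro eq_vecI) auto
      then show False using v(2) by simp
    qed
    moreover have "vc \<in> carrier_vec n" by (rule carrier_vecI[OF dvc])
    moreover have dr: "dim_row Tc = n" using Tc by simp
    ultimately have "eigenvector Tc vc 0" unfolding eigenvector_def dr by blast
    then have "eigenvalue Tc 0" unfolding eigenvalue_def by blast
    then show False using ev unfolding Tc_def by auto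
  qed
  have "-T \<in> Units (ring_mat TYPE(real) n ())" by (rule det_non_zero_imp_unit[OF mT d])
  then obtain B where B: "B \<in> carrier_mat n n" "B * (-T) = 1\<^sub>m n" "(-T) * B = 1\<^sub>m n"
    unfolding Units_def ring_mat_def by auto
  have ex: "\<exists>B. inverts_mat (-T) B \<and> inverts_mat B (-T)"
    using B mT unfolding inverts_mat_def by (intro exI[of _ B]) auto
  define Ni where "Ni = minv (-T)"
  have inv: "inverts_mat (-T) Ni \<and> inverts_mat Ni (-T)"
    unfolding Ni_def minv_def by (rule someI_ex[OF ex])
  then have i1: "(-T) * Ni = 1\<^sub>m n" and i2: "Ni * (-T) = 1\<^sub>m (dim_row Ni)"
    unfolding inverts_mat_def using mT by auto
  have "dim_col (Ni * (-T)) = n" using mT by simp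
  then have r: "dim_row Ni = n" using i2 by simp
  have "dim_col ((-T) * Ni) = dim_col Ni" by simp
  then have c: "dim_col Ni = n" using i1 by simp
  show "minv (-T) \<in> carrier_mat n n" using r c unfolding Ni_def[symmetric] by auto
  show "(-T) * minv (-T) = 1\<^sub>m n" using i1 unfolding Ni_def .
  show "minv (-T) * (-T) = 1\<^sub>m n" using i2 r unfolding Ni_def by simp
qed

lemma T_Ni:
  assumes tr: "ME_triple \<alpha> T t" and n: "n = dim_vec \<alpha>" and u: "u \<in> carrier_vec n"
  shows "T *\<^sub>v (minv (-T) *\<^sub>v u) = - u"
proof -
  have T: "T \<in> carrier_mat n n" using ME_triple_dims[OF tr] n by simp
  note Ni = neg_inv[OF tr n]
  have "T * minv (-T) = - ((-T) * minv (-T))" using T Ni(1) by simp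
  also have "\<dots> = - 1\<^sub>m n" using Ni(2) by simp
  finally have e: "T * minv (-T) = - 1\<^sub>m n" .
  have "T *\<^sub>v (minv (-T) *\<^sub>v u) = (T * minv (-T)) *\<^sub>v u"
    by (rule assoc_mult_mat_vec[OF T Ni(1) u, symmetric])
  also have "\<dots> = - (1\<^sub>m n *\<^sub>v u)" unfolding e using u by simp
  also have "\<dots> = - u" using u by simp
  finally show ?thesis .
qed

lemma pow_Suc_mv:
  fixes A :: "real mat"
  assumes A: "A \<in> carrier_mat n n" and u: "u \<in> carrier_vec n"
  shows "(A ^\<^sub>m Suc k) *\<^sub>v u = (A ^\<^sub>m k) *\<^sub>v (A *\<^sub>v u)"
  using assoc_mult_mat_vec[OF pow_carrier_mat[OF A] A u] by (simp only: pow_mat.simps)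

lemma hh_neg:
  assumes T: "T \<in> carrier_mat n n" and a: "dim_vec \<alpha> = n" and w: "dim_vec w = n"
  shows "hh \<alpha> T (- w) x = - hh \<alpha> T w x"
proof -
  have w': "dim_vec (-w) = n" using w by simp
  show ?thesis unfolding hh_def sprod_mat_vec[OF mexp_carrier[OF T] a w] sprod_mat_vec[OF mexp_carrier[OF T] a w']
    using w by (simp add: sum_negf[symmetric])
qed

lemma hh_bound:
  assumes tr: "ME_triple \<alpha> T t" and n: "n = dim_vec \<alpha>" and w: "dim_vec w = n"
  shows "\<exists>\<epsilon>>0. \<exists>C. \<forall>x\<ge>0. \<bar>hh \<alpha> T w x\<bar> \<le> C * exp (- \<epsilon> * x)"
proof -
  have T: "T \<in> carrier_mat n n" using ME_triple_dims[OF tr] n by simp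
  have ev: "\<forall>\<nu>::complex. eigenvalue (map_mat complex_of_real T) \<nu> \<longrightarrow> Re \<nu> < 0"
    using tr unfolding ME_triple_def by auto
  obtain \<epsilon> C where \<epsilon>: "\<epsilon> > 0" and C: "\<forall>x\<ge>0. \<forall>i<n. \<forall>j<n. \<bar>mexp T x $$ (i,j)\<bar> \<le> C * exp (- \<epsilon> * x)"
    using mexp_decay[OF T ev] by blast
  define K where "K = (\<Sum>i<n. \<Sum>j<n. \<bar>\<alpha> $ i\<bar> * \<bar>w $ j\<bar>)"
  have "\<bar>hh \<alpha> T w x\<bar> \<le> K * (C * exp (- \<epsilon> * x))" if x: "x \<ge> 0" for x
  proof -
    have "\<bar>hh \<alpha> T w x\<bar> = \<bar>\<Sum>i<n. \<Sum>j<n. \<alpha> $ i * mexp T x $$ (i,j) * w $ j\<bar>"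
      unfolding hh_def sprod_mat_vec[OF mexp_carrier[OF T] n[symmetric] w] ..
    also have "\<dots> \<le> (\<Sum>i<n. \<bar>\<Sum>j<n. \<alpha> $ i * mexp T x $$ (i,j) * w $ j\<bar>)" by (rule sum_abs)
    also have "\<dots> \<le> (\<Sum>i<n. \<Sum>j<n. \<bar>\<alpha> $ i * mexp T x $$ (i,j) * w $ j\<bar>)"
      by (intro sum_mono sum_abs)
    also have "\<dots> \<le> (\<Sum>i<n. \<Sum>j<n. \<bar>\<alpha> $ i\<bar> * \<bar>w $ j\<bar> * (C * exp (- \<epsilon> * x)))"
    proof (intro sum_mono)
      fix i j assume "i \<in> {..<n}" "j \<in> {..<n}"
      then have "\<bar>mexp T x $$ (i,j)\<bar> \<le> C * exp (- \<epsilon> * x)" using C x by auto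
      then have "\<bar>\<alpha> $ i\<bar> * \<bar>w $ j\<bar> * \<bar>mexp T x $$ (i,j)\<bar> \<le> \<bar>\<alpha> $ i\<bar> * \<bar>w $ j\<bar> * (C * exp (- \<epsilon> * x))"
        by (intro mult_left_mono) auto
      moreover have "\<bar>\<alpha> $ i * mexp T x $$ (i,j) * w $ j\<bar> = \<bar>\<alpha> $ i\<bar> * \<bar>w $ j\<bar> * \<bar>mexp T x $$ (i,j)\<bar>"
        by (simp add: abs_mult mult_ac)
      ultimately show "\<bar>\<alpha> $ i * mexp T x $$ (i,j) * w $ j\<bar> \<le> \<bar>\<alpha> $ i\<bar> * \<bar>w $ j\<bar> * (C * exp (- \<epsilon> * x))"
        by simp
    qed
    also have "\<dots> = K * (C * exp (- \<epsilon> * x))" unfolding K_def by (simp add: sum_distrib_right)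
    finally show ?thesis .
  qed
  then show ?thesis using \<epsilon> by (intro exI[of _ \<epsilon>] conjI exI[of _ "K * C"]) (auto simp: mult_ac)
qed

lemma pow_exp_decay:
  fixes \<epsilon> :: real assumes \<epsilon>: "\<epsilon> > 0"
  shows "((\<lambda>x. x ^ m * exp (- \<epsilon> * x)) \<longlongrightarrow> 0) at_top"
proof -
  have lim: "filterlim (\<lambda>x. \<epsilon> * x) at_top at_top"
    by (rule filterlim_tendsto_pos_mult_at_top[OF tendsto_const \<epsilon> filterlim_ident])
  have "((\<lambda>x. (\<epsilon> * x) ^ m / exp (\<epsilon> * x)) \<longlongrightarrow> 0) at_top"
    by (rule filterlim_compose[OF tendsto_power_div_exp_0 lim])
  then have "((\<lambda>x. (1 / \<epsilon> ^ m) * ((\<epsilon> * x) ^ m / exp (\<epsilon> * x))) \<longlongrightarrow> 0) at_top"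
    by (rule tendsto_mult_right_zero)
  moreover have "(1 / \<epsilon> ^ m) * ((\<epsilon> * x) ^ m / exp (\<epsilon> * x)) = x ^ m * exp (- \<epsilon> * x)" for x
    using \<epsilon> by (simp add: power_mult_distrib exp_minus field_simps)
  ultimately show ?thesis by simp
qed

lemma hh_decay:
  assumes tr: "ME_triple \<alpha> T t" and n: "n = dim_vec \<alpha>" and w: "dim_vec w = n"
  shows "((\<lambda>x. x ^ m * hh \<alpha> T w x) \<longlongrightarrow> 0) at_top"
proof -
  obtain \<epsilon> C where \<epsilon>: "\<epsilon> > 0" and C: "\<forall>x\<ge>0. \<bar>hh \<alpha> T w x\<bar> \<le> C * exp (- \<epsilon> * x)"
    using hh_bound[OF tr n w] by blast
  show ?thesis
  proof (rule Lim_null_comparison)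
    show "\<forall>\<^sub>F x in at_top. norm (x ^ m * hh \<alpha> T w x) \<le> C * (x ^ m * exp (- \<epsilon> * x))"
      using eventually_ge_at_top[of "0::real"]
    proof eventually_elim
      case (elim x)
      then have "\<bar>hh \<alpha> T w x\<bar> \<le> C * exp (- \<epsilon> * x)" using C by auto
      then have "x ^ m * \<bar>hh \<alpha> T w x\<bar> \<le> x ^ m * (C * exp (- \<epsilon> * x))"
        using elim by (intro mult_left_mono) auto
      then show ?case using elim by (simp add: abs_mult mult_ac)
    qed
    show "((\<lambda>x. C * (x ^ m * exp (- \<epsilon> * x))) \<longlongrightarrow> 0) at_top"
      by (rule tendsto_mult_right_zero[OF pow_exp_decay[OF \<epsilon>]])
  qed
qed




lemma FTC_tail:
  fixes g G :: "real \<Rightarrow> real"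
  assumes D: "\<And>x. (G has_real_derivative g x) (at x)"
    and C: "\<And>x. isCont g x"
    and nn: "\<And>x. v < x \<Longrightarrow> 0 \<le> g x"
    and L: "(G \<longlongrightarrow> 0) at_top"
  shows "integrable lborel (\<lambda>x. indicator {v<..} x * g x)"
    "(\<integral>x. indicator {v<..} x * g x \<partial>lborel) = - G v"
proof -
  have A: "((G \<circ> real_of_ereal) \<longlongrightarrow> G v) (at_right (ereal v))"
    unfolding ereal_tendsto_simps
  proof -
    have "isCont G v" by (rule DERIV_isCont[OF D])
    then have "(G \<longlongrightarrow> G v) (at v)" by (simp add: isCont_def)
    then show "(G \<longlongrightarrow> G v) (at_right v)" by (rule tendsto_within_subset) auto
  qed
  have B: "((G \<circ> real_of_ereal) \<longlongrightarrow> 0) (at_left (\<infinity>::ereal))"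
    unfolding ereal_tendsto_simps by (rule L)
  have ab: "ereal v < \<infinity>" by simp
  note FTC = interval_integral_FTC_nonneg[OF ab D C _ A B]
  have nn': "AE x in lborel. ereal v < ereal x \<longrightarrow> ereal x < \<infinity> \<longrightarrow> 0 \<le> g x"
    by (intro AE_I2) (auto intro: nn)
  have "set_integrable lborel (einterval (ereal v) \<infinity>) g" by (rule FTC(1)[OF nn'])
  then show "integrable lborel (\<lambda>x. indicator {v<..} x * g x)"
    unfolding set_integrable_def by simp
  have "(LBINT x=ereal v..\<infinity>. g x) = 0 - G v" by (rule FTC(2)[OF nn'])
  then show "(\<integral>x. indicator {v<..} x * g x \<partial>lborel) = - G v"
    unfolding interval_lebesgue_integral_def set_lebesgue_integral_def by simp
qed


definition ml1 :: "real mat \<Rightarrow> real vec \<Rightarrow> real vec" where "ml1 T t = minv (-T) *\<^sub>v t"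
definition ml2 :: "real mat \<Rightarrow> real vec \<Rightarrow> real vec" where "ml2 T t = minv (-T) *\<^sub>v ml1 T t"
definition ml3 :: "real mat \<Rightarrow> real vec \<Rightarrow> real vec" where "ml3 T t = minv (-T) *\<^sub>v ml2 T t"

lemma ME_vecs:
  assumes tr: "ME_triple \<alpha> T t" and n: "n = dim_vec \<alpha>"
  shows "dim_vec (ml1 T t) = n" "dim_vec (ml2 T t) = n" "dim_vec (ml3 T t) = n"
    "T *\<^sub>v ml1 T t = - t" "T *\<^sub>v ml2 T t = - ml1 T t" "T *\<^sub>v ml3 T t = - ml2 T t"
    "(minv (- T) ^\<^sub>m 2) *\<^sub>v t = ml2 T t" "(minv (- T) ^\<^sub>m 3) *\<^sub>v t = ml3 T t"
    "me_l T t = ml1 T t"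
proof -
  note Ni = neg_inv[OF tr n]
  have t: "t \<in> carrier_vec n" using ME_triple_dims(2)[OF tr] n by (intro carrier_vecI) simp
  show d1: "dim_vec (ml1 T t) = n" unfolding ml1_def using Ni(1) by simp
  show d2: "dim_vec (ml2 T t) = n" unfolding ml2_def using Ni(1) by simp
  show "dim_vec (ml3 T t) = n" unfolding ml3_def using Ni(1) by simp
  have c1: "ml1 T t \<in> carrier_vec n" by (rule carrier_vecI[OF d1])
  have c2: "ml2 T t \<in> carrier_vec n" by (rule carrier_vecI[OF d2])
  show "T *\<^sub>v ml1 T t = - t" unfolding ml1_def by (rule T_Ni[OF tr n t])
  show "T *\<^sub>v ml2 T t = - ml1 T t" unfolding ml2_def by (rule T_Ni[OF tr n c1])
  show "T *\<^sub>v ml3 T t = - ml2 T t" unfolding ml3_def by (rule T_Ni[OF tr n c2])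
  have p0: "(minv (- T) ^\<^sub>m 0) *\<^sub>v u = u" if "u \<in> carrier_vec n" for u
  proof -
    have "dim_row (minv (- T)) = n" using Ni(1) by simp
    then show ?thesis using that by simp
  qed
  have Nt: "minv (- T) *\<^sub>v t \<in> carrier_vec n" using Ni(1) t by simp
  have N1: "minv (- T) *\<^sub>v ml1 T t \<in> carrier_vec n" using Ni(1) c1 by simp
  have N2: "minv (- T) *\<^sub>v ml2 T t \<in> carrier_vec n" using Ni(1) c2 by simp
  have "(minv (- T) ^\<^sub>m 2) *\<^sub>v t = (minv (- T) ^\<^sub>m Suc (Suc 0)) *\<^sub>v t" by (simp add: numeral_2_eq_2)
  also have "\<dots> = (minv (- T) ^\<^sub>m Suc 0) *\<^sub>v ml1 T t" unfolding ml1_def by (rule pow_Suc_mv[OF Ni(1) t])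
  also have "\<dots> = (minv (- T) ^\<^sub>m 0) *\<^sub>v ml2 T t" unfolding ml2_def by (rule pow_Suc_mv[OF Ni(1) c1])
  also have "\<dots> = ml2 T t" by (rule p0[OF c2])
  finally show "(minv (- T) ^\<^sub>m 2) *\<^sub>v t = ml2 T t" .
  have "(minv (- T) ^\<^sub>m 3) *\<^sub>v t = (minv (- T) ^\<^sub>m Suc (Suc (Suc 0))) *\<^sub>v t" by (simp add: numeral_3_eq_3)
  also have "\<dots> = (minv (- T) ^\<^sub>m Suc (Suc 0)) *\<^sub>v ml1 T t" unfolding ml1_def by (rule pow_Suc_mv[OF Ni(1) t])
  also have "\<dots> = (minv (- T) ^\<^sub>m Suc 0) *\<^sub>v ml2 T t" unfolding ml2_def by (rule pow_Suc_mv[OF Ni(1) c1])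
  also have "\<dots> = (minv (- T) ^\<^sub>m 0) *\<^sub>v ml3 T t" unfolding ml3_def by (rule pow_Suc_mv[OF Ni(1) c2])
  also have "\<dots> = ml3 T t" by (rule p0[OF carrier_vecI[OF \<open>dim_vec (ml3 T t) = n\<close>]])
  finally show "(minv (- T) ^\<^sub>m 3) *\<^sub>v t = ml3 T t" .
  show "me_l T t = ml1 T t" unfolding me_l_def ml1_def ..
qed

lemma ME_tail:
  assumes dens: "ME_density \<alpha> T t" and v: "0 \<le> v"
  defines "f \<equiv> me_fun \<alpha> T t" and "S \<equiv> hh \<alpha> T (ml1 T t)" and "A \<equiv> hh \<alpha> T (ml2 T t)" and "B \<equiv> hh \<alpha> T (ml3 T t)"
  shows "integrable lborel (\<lambda>y. indicator {v<..} y * f y)"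
    "(\<integral>y. indicator {v<..} y * f y \<partial>lborel) = S v"
    "integrable lborel (\<lambda>y. indicator {v<..} y * (y * f y))"
    "(\<integral>y. indicator {v<..} y * (y * f y) \<partial>lborel) = v * S v + A v"
    "integrable lborel (\<lambda>y. indicator {v<..} y * (y\<^sup>2 * f y))"
    "(\<integral>y. indicator {v<..} y * (y\<^sup>2 * f y) \<partial>lborel) = v\<^sup>2 * S v + 2 * v * A v + 2 * B v"
proof -
  have tr: "ME_triple \<alpha> T t" using dens unfolding ME_density_def by simp
  define n where "n = dim_vec \<alpha>"
  have T: "T \<in> carrier_mat n n" and dt: "dim_vec t = n" using ME_triple_dims[OF tr] unfolding n_def by auto
  have da: "dim_vec \<alpha> = n" unfolding n_def ..
  note V = ME_vecs[OF tr n_def]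
  have fh: "f = hh \<alpha> T t" unfolding f_def hh_def[abs_def] me_fun_def[abs_def] ..
  have dS: "(S has_real_derivative - f y) (at y)" for y
  proof -
    have "(S has_real_derivative hh \<alpha> T (T *\<^sub>v ml1 T t) y) (at y)"
      unfolding S_def by (rule hh_deriv[OF T da V(1)])
    then show ?thesis unfolding V(4) hh_neg[OF T da dt] fh .
  qed
  have dA: "(A has_real_derivative - S y) (at y)" for y
  proof -
    have "(A has_real_derivative hh \<alpha> T (T *\<^sub>v ml2 T t) y) (at y)"
      unfolding A_def by (rule hh_deriv[OF T da V(2)])
    then show ?thesis unfolding V(5) hh_neg[OF T da V(1)] S_def .
  qed
  have dB: "(B has_real_derivative - A y) (at y)" for y
  proof -
    have "(B has_real_derivative hh \<alpha> T (T *\<^sub>v ml3 T t) y) (at y)"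
      unfolding B_def by (rule hh_deriv[OF T da V(3)])
    then show ?thesis unfolding V(6) hh_neg[OF T da V(2)] A_def .
  qed
  have cf: "isCont f y" for y
    unfolding fh by (rule DERIV_isCont[OF hh_deriv[OF T da dt]])
  have fnn: "0 \<le> f y" if "v < y" for y
    using dens that v unfolding ME_density_def f_def by auto
  have lim: "((\<lambda>x. x ^ m * hh \<alpha> T w x) \<longlongrightarrow> 0) at_top" if "dim_vec w = n" for w m
    by (rule hh_decay[OF tr n_def that])
  have lS0: "(S \<longlongrightarrow> 0) at_top" using lim[OF V(1), of 0] unfolding S_def by simp
  have lA0: "(A \<longlongrightarrow> 0) at_top" using lim[OF V(2), of 0] unfolding A_def by simp
  have lB0: "(B \<longlongrightarrow> 0) at_top" using lim[OF V(3), of 0] unfolding B_def by simp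
  have lS1: "((\<lambda>y. y * S y) \<longlongrightarrow> 0) at_top" using lim[OF V(1), of 1] unfolding S_def by simp
  have lA1: "((\<lambda>y. y * A y) \<longlongrightarrow> 0) at_top" using lim[OF V(2), of 1] unfolding A_def by simp
  have lS2: "((\<lambda>y. y * (y * S y)) \<longlongrightarrow> 0) at_top"
    using lim[OF V(1), of 2] unfolding S_def by (simp add: power2_eq_square mult.assoc)
  have D0: "((\<lambda>y. - S y) has_real_derivative f y) (at y)" for y
    using DERIV_minus[OF dS[of y]] by simp
  have L0: "((\<lambda>y. - S y) \<longlongrightarrow> 0) at_top" using tendsto_minus[OF lS0] by simp
  note F0 = FTC_tail[of "\<lambda>y. - S y" f, OF D0 cf fnn L0]
  show "integrable lborel (\<lambda>y. indicator {v<..} y * f y)" by (rule F0(1))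
  show I0: "(\<integral>y. indicator {v<..} y * f y \<partial>lborel) = S v" using F0(2) by simp
  have D1: "((\<lambda>y. - (y * S y + A y)) has_real_derivative y * f y) (at y)" for y
  proof -
    have "((\<lambda>y. - (y * S y + A y)) has_real_derivative - ((1 * S y + (- f y) * y) + (- S y))) (at y)"
      by (intro DERIV_minus DERIV_add DERIV_mult DERIV_ident dS dA)
    then show ?thesis by (rule DERIV_cong) (simp add: algebra_simps)
  qed
  have c1: "isCont (\<lambda>y. y * f y) y" for y by (intro continuous_intros cf)
  have n1: "0 \<le> y * f y" if "v < y" for y using fnn[OF that] that v by simp
  have L1: "((\<lambda>y. - (y * S y + A y)) \<longlongrightarrow> 0) at_top"
    using tendsto_minus[OF tendsto_add[OF lS1 lA0]] by simp
  note F1 = FTC_tail[of "\<lambda>y. - (y * S y + A y)" "\<lambda>y. y * f y", OF D1 c1 n1 L1]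
  show "integrable lborel (\<lambda>y. indicator {v<..} y * (y * f y))" by (rule F1(1))
  show "(\<integral>y. indicator {v<..} y * (y * f y) \<partial>lborel) = v * S v + A v" using F1(2) by simp
  have D2: "((\<lambda>y. - (y * (y * S y) + 2 * (y * A y) + 2 * B y)) has_real_derivative y\<^sup>2 * f y) (at y)" for y
  proof -
    have "((\<lambda>y. - (y * (y * S y) + 2 * (y * A y) + 2 * B y)) has_real_derivative
       - ((1 * (y * S y) + (1 * S y + (- f y) * y) * y) + 2 * (1 * A y + (- S y) * y) + 2 * (- A y))) (at y)"
      by (intro DERIV_minus DERIV_add DERIV_mult DERIV_ident dS dA dB DERIV_cmult)
    then show ?thesis by (rule DERIV_cong) (simp add: algebra_simps power2_eq_square)
  qed
  have c2: "isCont (\<lambda>y. y\<^sup>2 * f y) y" for y by (intro continuous_intros cf)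
  have n2: "0 \<le> y\<^sup>2 * f y" if "v < y" for y using fnn[OF that] by simp
  have L2: "((\<lambda>y. - (y * (y * S y) + 2 * (y * A y) + 2 * B y)) \<longlongrightarrow> 0) at_top"
    using tendsto_minus[OF tendsto_add[OF tendsto_add[OF lS2 tendsto_mult_right_zero[OF lA1, of 2]] tendsto_mult_right_zero[OF lB0, of 2]]]
    by simp
  note F2 = FTC_tail[of "\<lambda>y. - (y * (y * S y) + 2 * (y * A y) + 2 * B y)" "\<lambda>y. y\<^sup>2 * f y", OF D2 c2 n2 L2]
  show "integrable lborel (\<lambda>y. indicator {v<..} y * (y\<^sup>2 * f y))" by (rule F2(1))
  show "(\<integral>y. indicator {v<..} y * (y\<^sup>2 * f y) \<partial>lborel) = v\<^sup>2 * S v + 2 * v * A v + 2 * B v"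
    using F2(2) by (simp add: power2_eq_square)
qed


lemma ME_tail_zero:
  assumes dens: "ME_density \<alpha> T t" and v: "0 \<le> v"
    and S0: "hh \<alpha> T (ml1 T t) v = 0"
  shows "hh \<alpha> T (ml2 T t) v = 0" "hh \<alpha> T (ml3 T t) v = 0"
proof -
  note I = ME_tail[OF dens v]
  define f where "f = me_fun \<alpha> T t"
  have fnn: "0 \<le> f y" if "v < y" for y
    using dens that v unfolding ME_density_def f_def by auto
  have nn: "AE y in lborel. 0 \<le> indicator {v<..} y * f y"
    by (intro AE_I2) (auto simp: indicator_def fnn)
  have "(\<integral>y. indicator {v<..} y * f y \<partial>lborel) = 0" using I(2) S0 unfolding f_def by simp
  then have ae: "AE y in lborel. indicator {v<..} y * f y = 0"
    using integral_nonneg_eq_0_iff_AE[OF I(1)[folded f_def] nn] by simp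
  have "AE y in lborel. indicator {v<..} y * (y * f y) = 0"
    using ae by eventually_elim auto
  then have "(\<integral>y. indicator {v<..} y * (y * f y) \<partial>lborel) = 0" by (rule integral_eq_zero_AE)
  then show A0: "hh \<alpha> T (ml2 T t) v = 0" using I(4) S0 unfolding f_def by simp
  have "AE y in lborel. indicator {v<..} y * (y\<^sup>2 * f y) = 0"
    using ae by eventually_elim auto
  then have "(\<integral>y. indicator {v<..} y * (y\<^sup>2 * f y) \<partial>lborel) = 0" by (rule integral_eq_zero_AE)
  then show "hh \<alpha> T (ml3 T t) v = 0" using I(6) S0 A0 unfolding f_def by simp
qed

lemma alphaRL_sprod:
  assumes tr: "ME_triple \<alpha> T t" and w: "dim_vec w = dim_vec \<alpha>"
  shows "alphaRL \<alpha> T t z \<bullet> w = hh \<alpha> T w z / me_surv \<alpha> T t z"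
proof -
  define n where "n = dim_vec \<alpha>"
  have T: "T \<in> carrier_mat n n" using ME_triple_dims[OF tr] unfolding n_def by auto
  define E where "E = mexp T z"
  have E: "E \<in> carrier_mat n n" unfolding E_def using T by simp
  have dw: "dim_vec w = n" using w unfolding n_def .
  have "(transpose_mat E *\<^sub>v \<alpha>) \<bullet> w = (\<Sum>j<n. (\<Sum>i<n. E $$ (i,j) * \<alpha> $ i) * w $ j)"
    using E dw unfolding n_def by (simp add: scalar_prod_def row_def atLeast0LessThan)
  also have "\<dots> = (\<Sum>j<n. \<Sum>i<n. \<alpha> $ i * E $$ (i,j) * w $ j)"
    by (simp add: sum_distrib_left sum_distrib_right mult_ac)
  also have "\<dots> = (\<Sum>i<n. \<Sum>j<n. \<alpha> $ i * E $$ (i,j) * w $ j)"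
    by (rule sum.swap)
  also have "\<dots> = \<alpha> \<bullet> (E *\<^sub>v w)" by (rule sprod_mat_vec[OF E n_def[symmetric] dw, symmetric])
  finally have e: "(transpose_mat E *\<^sub>v \<alpha>) \<bullet> w = \<alpha> \<bullet> (E *\<^sub>v w)" .
  have "alphaRL \<alpha> T t z \<bullet> w = (1 / me_surv \<alpha> T t z) * ((transpose_mat E *\<^sub>v \<alpha>) \<bullet> w)"
    unfolding alphaRL_def E_def using E dw
    by (simp add: scalar_prod_def sum_distrib_left mult_ac E_def)
  then show ?thesis using e unfolding hh_def E_def by simp
qed




definition Jint :: "real vec \<Rightarrow> real mat \<Rightarrow> real vec \<Rightarrow> real \<Rightarrow> nat \<Rightarrow> real" where
  "Jint \<alpha> T t v m = (\<integral>y. indicator {v<..} y * (y ^ m * me_fun \<alpha> T t y) \<partial>lborel)"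

lemma Jint_integrable:
  assumes dens: "ME_density \<alpha> T t" and v: "0 \<le> v" and m: "m \<le> 2"
  shows "integrable lborel (\<lambda>y. indicator {v<..} y * (y ^ m * me_fun \<alpha> T t y))"
proof -
  note I = ME_tail[OF dens v]
  have "m = 0 \<or> m = 1 \<or> m = 2" using m by auto
  then show ?thesis using I(1,3,5) by auto
qed

lemma Jint_vals:
  assumes dens: "ME_density \<alpha> T t" and v: "0 \<le> v"
  shows "Jint \<alpha> T t v 0 = hh \<alpha> T (ml1 T t) v"
    "Jint \<alpha> T t v 1 = v * hh \<alpha> T (ml1 T t) v + hh \<alpha> T (ml2 T t) v"
    "Jint \<alpha> T t v 2 = v\<^sup>2 * hh \<alpha> T (ml1 T t) v + 2 * v * hh \<alpha> T (ml2 T t) v + 2 * hh \<alpha> T (ml3 T t) v"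
  using ME_tail[OF dens v] unfolding Jint_def by auto

lemma mmeam_pointwise:
  fixes x :: "nat \<Rightarrow> real"
  assumes v: "\<And>k. k < M \<Longrightarrow> 0 \<le> v k"
  shows "mmeam_fun L M p \<alpha> T t x * (\<Prod>k<M. indicator {v k<..} (x k) * x k ^ e k)
    = (\<Sum>i\<in>idx_set L M. p i * (\<Prod>k<M. indicator {v k<..} (x k) * (x k ^ e k * me_fun (\<alpha> (i k)) (T (i k)) (t (i k)) (x k))))"
proof (cases "\<forall>k<M. v k < x k")
  case True
  then have pos: "\<forall>k<M. 0 \<le> x k" using v by (meson less_imp_le order_trans)
  have ind: "indicator {v k<..} (x k) = (1::real)" if "k < M" for k using True that by auto
  define P where "P = (\<Prod>k<M. x k ^ e k)"
  define F where "F i = (\<Prod>k<M. me_fun (\<alpha> (i k)) (T (i k)) (t (i k)) (x k))" for i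
  have e1: "(\<Prod>k<M. indicator {v k<..} (x k) * x k ^ e k) = P"
    unfolding P_def by (intro prod.cong refl) (simp add: ind)
  have e2: "(\<Prod>k<M. indicator {v k<..} (x k) * (x k ^ e k * me_fun (\<alpha> (i k)) (T (i k)) (t (i k)) (x k)))
     = P * F i" for i
  proof -
    have "(\<Prod>k<M. indicator {v k<..} (x k) * (x k ^ e k * me_fun (\<alpha> (i k)) (T (i k)) (t (i k)) (x k)))
       = (\<Prod>k<M. x k ^ e k * me_fun (\<alpha> (i k)) (T (i k)) (t (i k)) (x k))"
      by (intro prod.cong refl) (simp add: ind)
    also have "\<dots> = P * F i" unfolding P_def F_def by (rule prod.distrib)
    finally show ?thesis .
  qed
  have mm: "mmeam_fun L M p \<alpha> T t x = (\<Sum>i\<in>idx_set L M. p i * F i)"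
    using pos unfolding mmeam_fun_def F_def by simp
  have "mmeam_fun L M p \<alpha> T t x * (\<Prod>k<M. indicator {v k<..} (x k) * x k ^ e k) = (\<Sum>i\<in>idx_set L M. p i * F i) * P"
    unfolding mm e1 ..
  also have "\<dots> = (\<Sum>i\<in>idx_set L M. p i * F i * P)" by (rule sum_distrib_right)
  also have "\<dots> = (\<Sum>i\<in>idx_set L M. p i * (P * F i))" by (simp only: mult_ac)
  finally show ?thesis unfolding e2 .
next
  case False
  then obtain k0 where k0: "k0 < M" "\<not> v k0 < x k0" by auto
  have z: "(\<Prod>k<M. indicator {v k<..} (x k) * (g k :: real)) = 0" for g
    using k0 by (intro prod_zero) (auto intro!: bexI[of _ k0])
  show ?thesis unfolding z by simp
qed


lemma idx_set_mem: "i \<in> idx_set L M \<Longrightarrow> k < M \<Longrightarrow> i k < L"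
  unfolding idx_set_def by auto

lemma finite_idx_set: "finite (idx_set L M)"
  unfolding idx_set_def by (intro finite_PiE) auto

lemma mmeam_integral:
  assumes dens: "\<And>j. j < L \<Longrightarrow> ME_density (\<alpha> j) (T j) (t j)"
    and v: "\<And>k. k < M \<Longrightarrow> 0 \<le> v k" and e: "\<And>k. k < M \<Longrightarrow> e k \<le> 2"
  shows "(\<integral>x. mmeam_fun L M p \<alpha> T t x * (\<Prod>k<M. indicator {v k<..} (x k) * x k ^ e k) \<partial>PiM {..<M} (\<lambda>_. lborel))
     = (\<Sum>i\<in>idx_set L M. p i * (\<Prod>k<M. Jint (\<alpha> (i k)) (T (i k)) (t (i k)) (v k) (e k)))"
proof -
  have ps: "product_sigma_finite (\<lambda>_::nat. lborel)"
    unfolding product_sigma_finite_def by (simp add: lborel.sigma_finite_measure_axioms)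
  define h where "h i k y = indicator {v k<..} y * (y ^ e k * me_fun (\<alpha> (i k)) (T (i k)) (t (i k)) y)" for i k y
  have hi: "integrable lborel (h i k)" if "i \<in> idx_set L M" "k \<in> {..<M}" for i k
  proof -
    have k: "k < M" using that by simp
    have "i k < L" using idx_set_mem[OF that(1) k] .
    then show ?thesis unfolding h_def[abs_def] by (rule Jint_integrable[OF dens v[OF k] e[OF k]])
  qed
  have pint: "integrable (PiM {..<M} (\<lambda>_. lborel)) (\<lambda>x. \<Prod>k\<in>{..<M}. h i k (x k))" if "i \<in> idx_set L M" for i
    by (rule product_sigma_finite.product_integrable_prod[OF ps]) (auto intro: hi that)
  have "(\<integral>x. mmeam_fun L M p \<alpha> T t x * (\<Prod>k<M. indicator {v k<..} (x k) * x k ^ e k) \<partial>PiM {..<M} (\<lambda>_. lborel))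
     = (\<integral>x. (\<Sum>i\<in>idx_set L M. p i * (\<Prod>k<M. h i k (x k))) \<partial>PiM {..<M} (\<lambda>_. lborel))"
    unfolding h_def by (intro Bochner_Integration.integral_cong refl) (rule mmeam_pointwise[OF v])
  also have "\<dots> = (\<Sum>i\<in>idx_set L M. (\<integral>x. p i * (\<Prod>k<M. h i k (x k)) \<partial>PiM {..<M} (\<lambda>_. lborel)))"
    by (rule Bochner_Integration.integral_sum) (auto intro: pint)
  also have "\<dots> = (\<Sum>i\<in>idx_set L M. p i * (\<integral>x. (\<Prod>k<M. h i k (x k)) \<partial>PiM {..<M} (\<lambda>_. lborel)))"
    by (intro sum.cong refl Bochner_Integration.integral_mult_right_zero)
  also have "\<dots> = (\<Sum>i\<in>idx_set L M. p i * (\<Prod>k<M. (\<integral>y. h i k y \<partial>lborel)))"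
  proof (intro sum.cong refl arg_cong2[where f = "(*)"])
    fix i assume "i \<in> idx_set L M"
    then show "(\<integral>x. (\<Prod>k<M. h i k (x k)) \<partial>PiM {..<M} (\<lambda>_. lborel)) = (\<Prod>k<M. (\<integral>y. h i k y \<partial>lborel))"
      by (intro product_sigma_finite.product_integral_prod[OF ps]) (auto intro: hi)
  qed
  also have "\<dots> = (\<Sum>i\<in>idx_set L M. p i * (\<Prod>k<M. Jint (\<alpha> (i k)) (T (i k)) (t (i k)) (v k) (e k)))"
    unfolding h_def Jint_def ..
  finally show ?thesis .
qed


lemma prod_if_one:
  fixes g h :: "nat \<Rightarrow> real"
  assumes "finite K" "j \<in> K"
  shows "(\<Prod>k\<in>K. if k = j then g k else h k) = g j * (\<Prod>k\<in>K - {j}. h k)"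
proof -
  have "(\<Prod>k\<in>K. if k = j then g k else h k) = (if j = j then g j else h j) * (\<Prod>k\<in>K - {j}. if k = j then g k else h k)"
    by (rule prod.remove[OF assms])
  also have "(\<Prod>k\<in>K - {j}. if k = j then g k else h k) = (\<Prod>k\<in>K - {j}. h k)"
    by (intro prod.cong) auto
  finally show ?thesis by simp
qed

lemma alg1:
  fixes S A :: "'i \<Rightarrow> nat \<Rightarrow> real" and p :: "'i \<Rightarrow> real"
  assumes fin: "finite I" "finite K" and j: "j \<in> K"
    and D: "D = (\<Sum>i\<in>I. p i * (\<Prod>k\<in>K. S i k))" and Dpos: "D > 0"
    and z: "\<And>i. i \<in> I \<Longrightarrow> S i j = 0 \<Longrightarrow> A i j = 0"
  shows "(\<Sum>i\<in>I. p i * (\<Prod>k\<in>K. if k = j then w * S i k + A i k else S i k)) / D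
     = w + (\<Sum>i\<in>I. (p i * (\<Prod>k\<in>K. S i k) / D) * (A i j / S i j))"
proof -
  define R where "R i = (\<Prod>k\<in>K - {j}. S i k)" for i
  have pS: "(\<Prod>k\<in>K. S i k) = S i j * R i" for i
    unfolding R_def by (rule prod.remove[OF fin(2) j])
  have pI: "(\<Prod>k\<in>K. if k = j then w * S i k + A i k else S i k) = (w * S i j + A i j) * R i" for i
    unfolding R_def by (rule prod_if_one[OF fin(2) j])
  have t: "(p i * (\<Prod>k\<in>K. S i k) / D) * (A i j / S i j) = p i * A i j * R i / D" if "i \<in> I" for i
    using z[OF that] unfolding pS by (cases "S i j = 0") auto
  have "(\<Sum>i\<in>I. p i * (\<Prod>k\<in>K. if k = j then w * S i k + A i k else S i k))
      = w * (\<Sum>i\<in>I. p i * (\<Prod>k\<in>K. S i k)) + (\<Sum>i\<in>I. p i * A i j * R i)"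
  proof -
    have "(\<Sum>i\<in>I. p i * (\<Prod>k\<in>K. if k = j then w * S i k + A i k else S i k))
      = (\<Sum>i\<in>I. w * (p i * (S i j * R i)) + p i * A i j * R i)"
      unfolding pI by (intro sum.cong refl) (simp add: algebra_simps)
    also have "\<dots> = w * (\<Sum>i\<in>I. p i * (S i j * R i)) + (\<Sum>i\<in>I. p i * A i j * R i)"
      by (simp add: sum.distrib sum_distrib_left)
    finally show ?thesis unfolding pS .
  qed
  then have "(\<Sum>i\<in>I. p i * (\<Prod>k\<in>K. if k = j then w * S i k + A i k else S i k)) / D
      = w + (\<Sum>i\<in>I. p i * A i j * R i) / D"
    using Dpos unfolding D[symmetric] by (simp add: field_simps)
  also have "(\<Sum>i\<in>I. p i * A i j * R i) / D = (\<Sum>i\<in>I. (p i * (\<Prod>k\<in>K. S i k) / D) * (A i j / S i j))"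
    unfolding sum_divide_distrib by (intro sum.cong refl t[symmetric]) simp
  finally show ?thesis .
qed


lemma tsum1:
  fixes S A :: "'i \<Rightarrow> nat \<Rightarrow> real" and p :: "'i \<Rightarrow> real"
  assumes fin: "finite K" and j: "j \<in> K"
    and z: "\<And>i. i \<in> I \<Longrightarrow> S i j = 0 \<Longrightarrow> A i j = 0"
  shows "(\<Sum>i\<in>I. (p i * (\<Prod>k\<in>K. S i k) / D) * (A i j / S i j))
     = (\<Sum>i\<in>I. p i * A i j * (\<Prod>k\<in>K - {j}. S i k)) / D"
proof -
  have "(p i * (\<Prod>k\<in>K. S i k) / D) * (A i j / S i j) = p i * A i j * (\<Prod>k\<in>K - {j}. S i k) / D"
    if "i \<in> I" for i
    using z[OF that] unfolding prod.remove[OF fin j, of "S i"] by (cases "S i j = 0") auto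
  then show ?thesis unfolding sum_divide_distrib by (intro sum.cong refl) auto
qed

lemma tsum2:
  fixes S A :: "'i \<Rightarrow> nat \<Rightarrow> real" and p :: "'i \<Rightarrow> real"
  assumes fin: "finite K" and j1: "j1 \<in> K" and j2: "j2 \<in> K" and ne: "j1 \<noteq> j2"
    and z1: "\<And>i. i \<in> I \<Longrightarrow> S i j1 = 0 \<Longrightarrow> A i j1 = 0"
    and z2: "\<And>i. i \<in> I \<Longrightarrow> S i j2 = 0 \<Longrightarrow> A i j2 = 0"
  shows "(\<Sum>i\<in>I. (p i * (\<Prod>k\<in>K. S i k) / D) * ((A i j1 / S i j1) * (A i j2 / S i j2)))
     = (\<Sum>i\<in>I. p i * A i j1 * A i j2 * (\<Prod>k\<in>K - {j1} - {j2}. S i k)) / D"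
proof -
  have j2': "j2 \<in> K - {j1}" using j2 ne by simp
  have fK1: "finite (K - {j1})" using fin by simp
  have pr: "(\<Prod>k\<in>K. S i k) = S i j1 * (S i j2 * (\<Prod>k\<in>K - {j1} - {j2}. S i k))" for i
    unfolding prod.remove[OF fin j1, of "S i"] prod.remove[OF fK1 j2', of "S i"] ..
  have "(p i * (\<Prod>k\<in>K. S i k) / D) * ((A i j1 / S i j1) * (A i j2 / S i j2))
      = p i * A i j1 * A i j2 * (\<Prod>k\<in>K - {j1} - {j2}. S i k) / D" if "i \<in> I" for i
    using z1[OF that] z2[OF that] unfolding pr
    by (cases "S i j1 = 0"; cases "S i j2 = 0") auto
  then show ?thesis unfolding sum_divide_distrib by (intro sum.cong refl) auto
qed

lemma alg2:
  fixes S A B :: "'i \<Rightarrow> nat \<Rightarrow> real" and p :: "'i \<Rightarrow> real"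
  assumes fin: "finite I" "finite K" and j: "j \<in> K"
    and D: "D = (\<Sum>i\<in>I. p i * (\<Prod>k\<in>K. S i k))" and Dpos: "D > 0"
    and zA: "\<And>i. i \<in> I \<Longrightarrow> S i j = 0 \<Longrightarrow> A i j = 0"
    and zB: "\<And>i. i \<in> I \<Longrightarrow> S i j = 0 \<Longrightarrow> B i j = 0"
  shows "(\<Sum>i\<in>I. p i * (\<Prod>k\<in>K. if k = j then w\<^sup>2 * S i k + 2 * w * A i k + 2 * B i k else S i k)) / D
     = - w\<^sup>2 + 2 * w * ((\<Sum>i\<in>I. p i * (\<Prod>k\<in>K. if k = j then w * S i k + A i k else S i k)) / D)
       + 2 * (\<Sum>i\<in>I. (p i * (\<Prod>k\<in>K. S i k) / D) * (B i j / S i j))"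
proof -
  define R where "R i = (\<Prod>k\<in>K - {j}. S i k)" for i
  have pS: "(\<Prod>k\<in>K. S i k) = S i j * R i" for i
    unfolding R_def by (rule prod.remove[OF fin(2) j])
  have pI: "(\<Prod>k\<in>K. if k = j then w\<^sup>2 * S i k + 2 * w * A i k + 2 * B i k else S i k)
     = (w\<^sup>2 * S i j + 2 * w * A i j + 2 * B i j) * R i" for i
    unfolding R_def by (rule prod_if_one[OF fin(2) j])
  define X where "X = (\<Sum>i\<in>I. p i * A i j * R i)"
  define Y where "Y = (\<Sum>i\<in>I. p i * B i j * R i)"
  have E1: "(\<Sum>i\<in>I. p i * (\<Prod>k\<in>K. if k = j then w * S i k + A i k else S i k)) / D = w + X / D"
    using alg1[where S=S and A=A and p=p and I=I and K=K and j=j and D=D and w=w, OF fin j D Dpos zA] tsum1[where S=S and A=A and p=p and I=I and K=K and j=j and D=D, OF fin(2) j zA] unfolding X_def R_def by simp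
  have Bt: "(\<Sum>i\<in>I. (p i * (\<Prod>k\<in>K. S i k) / D) * (B i j / S i j)) = Y / D"
    using tsum1[where S=S and A=B and p=p and I=I and K=K and j=j and D=D, OF fin(2) j zB] unfolding Y_def R_def by simp
  have "(\<Sum>i\<in>I. p i * (\<Prod>k\<in>K. if k = j then w\<^sup>2 * S i k + 2 * w * A i k + 2 * B i k else S i k))
      = (\<Sum>i\<in>I. w\<^sup>2 * (p i * (S i j * R i)) + 2 * w * (p i * A i j * R i) + 2 * (p i * B i j * R i))"
    unfolding pI by (intro sum.cong refl) (simp add: algebra_simps)
  also have "\<dots> = w\<^sup>2 * D + 2 * w * X + 2 * Y"
    unfolding D pS X_def Y_def by (simp add: sum.distrib sum_distrib_left)
  finally have num: "(\<Sum>i\<in>I. p i * (\<Prod>k\<in>K. if k = j then w\<^sup>2 * S i k + 2 * w * A i k + 2 * B i k else S i k))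
      = w\<^sup>2 * D + 2 * w * X + 2 * Y" .
  show ?thesis unfolding num E1 Bt using Dpos by (simp add: field_simps power2_eq_square)
qed

lemma alg3:
  fixes S A :: "'i \<Rightarrow> nat \<Rightarrow> real" and p :: "'i \<Rightarrow> real"
  assumes fin: "finite I" "finite K" and j1: "j1 \<in> K" and j2: "j2 \<in> K" and ne: "j1 \<noteq> j2"
    and D: "D = (\<Sum>i\<in>I. p i * (\<Prod>k\<in>K. S i k))" and Dpos: "D > 0"
    and z1: "\<And>i. i \<in> I \<Longrightarrow> S i j1 = 0 \<Longrightarrow> A i j1 = 0"
    and z2: "\<And>i. i \<in> I \<Longrightarrow> S i j2 = 0 \<Longrightarrow> A i j2 = 0"
  shows "(\<Sum>i\<in>I. p i * (\<Prod>k\<in>K. if k = j1 then w1 * S i k + A i k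
            else if k = j2 then w2 * S i k + A i k else S i k)) / D
     = - (w1 * w2) + w1 * ((\<Sum>i\<in>I. p i * (\<Prod>k\<in>K. if k = j2 then w2 * S i k + A i k else S i k)) / D)
       + w2 * ((\<Sum>i\<in>I. p i * (\<Prod>k\<in>K. if k = j1 then w1 * S i k + A i k else S i k)) / D)
       + (\<Sum>i\<in>I. (p i * (\<Prod>k\<in>K. S i k) / D) * ((A i j1 / S i j1) * (A i j2 / S i j2)))"
proof -
  have j2': "j2 \<in> K - {j1}" using j2 ne by simp
  have j1': "j1 \<in> K - {j2}" using j1 ne by simp
  have fin': "finite (K - {j1})" "finite (K - {j2})" using fin by auto
  define R where "R i = (\<Prod>k\<in>K - {j1} - {j2}. S i k)" for i
  have sw: "K - {j2} - {j1} = K - {j1} - {j2}" by auto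
  have pS: "(\<Prod>k\<in>K. S i k) = S i j1 * (S i j2 * R i)" for i
    unfolding R_def prod.remove[OF fin(2) j1, of "S i"] prod.remove[OF fin'(1) j2', of "S i"] ..
  have p1: "(\<Prod>k\<in>K - {j1}. S i k) = S i j2 * R i" for i
    unfolding R_def by (rule prod.remove[OF fin'(1) j2'])
  have p2: "(\<Prod>k\<in>K - {j2}. S i k) = S i j1 * R i" for i
    unfolding R_def sw[symmetric] by (rule prod.remove[OF fin'(2) j1'])
  have pI: "(\<Prod>k\<in>K. if k = j1 then w1 * S i k + A i k else if k = j2 then w2 * S i k + A i k else S i k)
     = (w1 * S i j1 + A i j1) * ((w2 * S i j2 + A i j2) * R i)" for i
  proof -
    have "(\<Prod>k\<in>K. if k = j1 then w1 * S i k + A i k else if k = j2 then w2 * S i k + A i k else S i k)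
       = (w1 * S i j1 + A i j1) * (\<Prod>k\<in>K - {j1}. if k = j2 then w2 * S i k + A i k else S i k)"
      by (rule prod_if_one[OF fin(2) j1])
    also have "(\<Prod>k\<in>K - {j1}. if k = j2 then w2 * S i k + A i k else S i k) = (w2 * S i j2 + A i j2) * R i"
      unfolding R_def by (rule prod_if_one[OF fin'(1) j2'])
    finally show ?thesis .
  qed
  define X1 where "X1 = (\<Sum>i\<in>I. p i * A i j1 * (S i j2 * R i))"
  define X2 where "X2 = (\<Sum>i\<in>I. p i * A i j2 * (S i j1 * R i))"
  define Y where "Y = (\<Sum>i\<in>I. p i * A i j1 * A i j2 * R i)"
  have E1: "(\<Sum>i\<in>I. p i * (\<Prod>k\<in>K. if k = j1 then w1 * S i k + A i k else S i k)) / D = w1 + X1 / D"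
    using alg1[where S=S and A=A and p=p and I=I and K=K and D=D and w=w1, OF fin j1 D Dpos z1] tsum1[where S=S and A=A and p=p and I=I and K=K and D=D, OF fin(2) j1 z1] unfolding X1_def p1 by simp
  have E2: "(\<Sum>i\<in>I. p i * (\<Prod>k\<in>K. if k = j2 then w2 * S i k + A i k else S i k)) / D = w2 + X2 / D"
    using alg1[where S=S and A=A and p=p and I=I and K=K and D=D and w=w2, OF fin j2 D Dpos z2] tsum1[where S=S and A=A and p=p and I=I and K=K and D=D, OF fin(2) j2 z2] unfolding X2_def p2 by simp
  have Ct: "(\<Sum>i\<in>I. (p i * (\<Prod>k\<in>K. S i k) / D) * ((A i j1 / S i j1) * (A i j2 / S i j2))) = Y / D"
    unfolding Y_def R_def by (rule tsum2[where S=S and A=A and p=p and I=I and K=K and D=D, OF fin(2) j1 j2 ne z1 z2])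
  have "(\<Sum>i\<in>I. p i * (\<Prod>k\<in>K. if k = j1 then w1 * S i k + A i k else if k = j2 then w2 * S i k + A i k else S i k))
      = (\<Sum>i\<in>I. w1 * w2 * (p i * (S i j1 * (S i j2 * R i))) + w1 * (p i * A i j2 * (S i j1 * R i))
            + w2 * (p i * A i j1 * (S i j2 * R i)) + p i * A i j1 * A i j2 * R i)"
    unfolding pI by (intro sum.cong refl) (simp add: algebra_simps)
  also have "\<dots> = w1 * w2 * D + w1 * X2 + w2 * X1 + Y"
    unfolding D pS X1_def X2_def Y_def by (simp add: sum.distrib sum_distrib_left)
  finally have num: "(\<Sum>i\<in>I. p i * (\<Prod>k\<in>K. if k = j1 then w1 * S i k + A i k else if k = j2 then w2 * S i k + A i k else S i k))
      = w1 * w2 * D + w1 * X2 + w2 * X1 + Y" .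
  show ?thesis unfolding num E1 E2 Ct using Dpos by (simp add: field_simps)
qed





lemma key_integral:
  assumes distr: "distributed P (PiM {..<M} (\<lambda>_. lborel)) X (\<lambda>x. ennreal (mmeam_fun L M p \<alpha> T t x))"
    and fnonneg: "\<And>x. (\<forall>k<M. 0 \<le> x k) \<Longrightarrow> 0 \<le> mmeam_fun L M p \<alpha> T t x"
    and dens: "\<And>j. j < L \<Longrightarrow> ME_density (\<alpha> j) (T j) (t j)"
    and v: "\<And>k. k < M \<Longrightarrow> 0 \<le> v k" and e: "\<And>k. k < M \<Longrightarrow> e k \<le> 2"
  shows "(\<integral>\<omega>. (\<Prod>k<M. indicator {v k<..} (X \<omega> k) * X \<omega> k ^ e k) \<partial>P)
     = (\<Sum>i\<in>idx_set L M. p i * (\<Prod>k<M. Jint (\<alpha> (i k)) (T (i k)) (t (i k)) (v k) (e k)))"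
proof -
  have meas: "(\<lambda>x. \<Prod>k<M. indicator {v k<..} (x k) * x k ^ e k) \<in> borel_measurable (PiM {..<M} (\<lambda>_. lborel))"
    by measurable
  have nn: "0 \<le> mmeam_fun L M p \<alpha> T t x" for x
    using fnonneg[of x] unfolding mmeam_fun_def by auto
  have "(\<integral>x. mmeam_fun L M p \<alpha> T t x * (\<Prod>k<M. indicator {v k<..} (x k) * x k ^ e k) \<partial>PiM {..<M} (\<lambda>_. lborel))
     = (\<integral>\<omega>. (\<Prod>k<M. indicator {v k<..} (X \<omega> k) * X \<omega> k ^ e k) \<partial>P)"
    by (rule distributed_integral[OF distr meas nn])
  then show ?thesis using mmeam_integral[OF dens v e] by simp
qed

lemma VaR_nonneg:
  assumes P: "prob_space P" and Y: "Y \<in> borel_measurable P" and th: "\<theta> < 1"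
  shows "0 \<le> VaR P Y \<theta>"
proof -
  define A where "A n = {\<omega> \<in> space P. Y \<omega> \<le> real n}" for n :: nat
  have As: "range A \<subseteq> sets P" unfolding A_def using Y by auto
  have inc: "incseq A" unfolding A_def incseq_def by (auto intro: order_trans)
  have U: "(\<Union>n. A n) = space P"
  proof
    show "(\<Union>n. A n) \<subseteq> space P" unfolding A_def by auto
    show "space P \<subseteq> (\<Union>n. A n)"
    proof
      fix \<omega> assume "\<omega> \<in> space P"
      obtain n :: nat where "Y \<omega> \<le> real n" using real_arch_simple by blast
      then show "\<omega> \<in> (\<Union>n. A n)" unfolding A_def using \<open>\<omega> \<in> space P\<close> by auto
    qed
  qed
  have "(\<lambda>n. measure P (A n)) \<longlonglongrightarrow> measure P (\<Union>n. A n)"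
    by (rule finite_measure.finite_Lim_measure_incseq[OF prob_space.axioms(1)[OF P] As inc])
  then have "(\<lambda>n. measure P (A n)) \<longlonglongrightarrow> 1" unfolding U using prob_space.prob_space[OF P] by simp
  then have "eventually (\<lambda>n. \<theta> < measure P (A n)) sequentially"
    using th by (rule order_tendstoD)
  then obtain n where n: "\<theta> < measure P (A n)" by (auto simp: eventually_sequentially)
  define S where "S = {y. 0 \<le> y \<and> \<theta> \<le> dist_fun P Y y}"
  have "real n \<in> S" unfolding S_def dist_fun_def using n unfolding A_def by simp
  then have "S \<noteq> {}" by auto
  then have "0 \<le> Inf S" by (rule cInf_greatest) (auto simp: S_def)
  then show ?thesis unfolding VaR_def S_def .
qed


lemma pow_delta1:
  fixes x :: "nat \<Rightarrow> real"
  assumes j: "j < M"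
  shows "(\<Prod>k<M. x k ^ (if k = j then m else 0)) = x j ^ m"
proof -
  have "(\<Prod>k<M. x k ^ (if k = j then m else 0)) = (\<Prod>k\<in>{..<M}. if k = j then x k ^ m else 1)"
    by (intro prod.cong) auto
  also have "\<dots> = x j ^ m * (\<Prod>k\<in>{..<M} - {j}. 1)"
    by (rule prod_if_one) (use j in auto)
  finally show ?thesis by simp
qed

lemma pow_delta2:
  fixes x :: "nat \<Rightarrow> real"
  assumes j1: "j1 < M" and j2: "j2 < M" and ne: "j1 \<noteq> j2"
  shows "(\<Prod>k<M. x k ^ (if k = j1 then 1 else if k = j2 then 1 else 0)) = x j1 * x j2"
proof -
  have "(\<Prod>k<M. x k ^ (if k = j1 then 1 else if k = j2 then 1 else 0))
      = (\<Prod>k\<in>{..<M}. if k = j1 then x k else (if k = j2 then x k else 1))"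
    by (intro prod.cong) auto
  also have "\<dots> = x j1 * (\<Prod>k\<in>{..<M} - {j1}. if k = j2 then x k else 1)"
    by (rule prod_if_one) (use j1 in auto)
  also have "(\<Prod>k\<in>{..<M} - {j1}. if k = j2 then x k else 1) = x j2 * (\<Prod>k\<in>{..<M} - {j1} - {j2}. 1)"
    by (rule prod_if_one) (use j2 ne in auto)
  finally show ?thesis by simp
qed

lemma ind_prod:
  fixes x :: "nat \<Rightarrow> real"
  shows "(\<Prod>k<M. indicator {v k<..} (x k)) = (if \<forall>k<M. v k < x k then 1 else (0::real))"
proof (cases "\<forall>k<M. v k < x k")
  case True
  then have "(\<Prod>k<M. indicator {v k<..} (x k)) = (\<Prod>k<M. (1::real))" by (intro prod.cong) auto
  then show ?thesis using True by simp
next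
  case False
  then obtain k0 where "k0 < M" "\<not> v k0 < x k0" by auto
  then have "(\<Prod>k<M. indicator {v k<..} (x k)) = (0::real)" by (intro prod_zero) (auto intro!: bexI[of _ k0])
  then show ?thesis using False by simp
qed

theorem theorem9:
  fixes P :: "'a measure" and X :: "'a \<Rightarrow> nat \<Rightarrow> real"
    and L M :: nat and p :: "(nat \<Rightarrow> nat) \<Rightarrow> real"
    and \<alpha> :: "nat \<Rightarrow> real vec" and T :: "nat \<Rightarrow> real mat" and t :: "nat \<Rightarrow> real vec"
    and \<theta> :: "nat \<Rightarrow> real" and v :: "nat \<Rightarrow> real" and E :: "'a set"
  assumes "prob_space P"
    and "L > 0" and "M > 0"
    and dens: "\<And>j. j < L \<Longrightarrow> ME_density (\<alpha> j) (T j) (t j)"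
    and psum: "(\<Sum>i\<in>idx_set L M. p i) = 1"
    and fnonneg: "\<And>x. (\<forall>k<M. 0 \<le> x k) \<Longrightarrow> 0 \<le> mmeam_fun L M p \<alpha> T t x"
    and distr: "distributed P (PiM {..<M} (\<lambda>_. lborel)) X
                  (\<lambda>x. ennreal (mmeam_fun L M p \<alpha> T t x))"
    and theta: "\<And>k. k < M \<Longrightarrow> 0 \<le> \<theta> k \<and> \<theta> k < 1"
    and v_def: "\<And>k. k < M \<Longrightarrow> v k = VaR P (\<lambda>\<omega>. X \<omega> k) (\<theta> k)"
    and E_def: "E = {\<omega> \<in> space P. \<forall>k<M. X \<omega> k > v k}"
    and Epos: "measure P E > 0"
  shows
    "(\<forall>j<M. cond_exp_event P (\<lambda>\<omega>. X \<omega> j) E =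
        v j + (\<Sum>i\<in>idx_set L M. pRL L M p \<alpha> T t v i *
           (alphaRL (\<alpha> (i j)) (T (i j)) (t (i j)) (v j)
              \<bullet> ((minv (- T (i j)) ^\<^sub>m 2) *\<^sub>v t (i j)))))
   \<and> (\<forall>j<M. cond_exp_event P (\<lambda>\<omega>. (X \<omega> j)\<^sup>2) E =
        - (v j)\<^sup>2 + 2 * v j * cond_exp_event P (\<lambda>\<omega>. X \<omega> j) E
        + 2 * (\<Sum>i\<in>idx_set L M. pRL L M p \<alpha> T t v i *
           (alphaRL (\<alpha> (i j)) (T (i j)) (t (i j)) (v j)
              \<bullet> ((minv (- T (i j)) ^\<^sub>m 3) *\<^sub>v t (i j)))))
   \<and> (\<forall>j1<M. \<forall>j2<M. j1 \<noteq> j2 \<longrightarrow>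
        cond_exp_event P (\<lambda>\<omega>. X \<omega> j1 * X \<omega> j2) E =
          - (v j1 * v j2) + v j1 * cond_exp_event P (\<lambda>\<omega>. X \<omega> j2) E
          + v j2 * cond_exp_event P (\<lambda>\<omega>. X \<omega> j1) E
          + (\<Sum>i\<in>idx_set L M. pRL L M p \<alpha> T t v i *
              ((alphaRL (\<alpha> (i j1)) (T (i j1)) (t (i j1)) (v j1)
                  \<bullet> ((minv (- T (i j1)) ^\<^sub>m 2) *\<^sub>v t (i j1))) *
               (alphaRL (\<alpha> (i j2)) (T (i j2)) (t (i j2)) (v j2)
                  \<bullet> ((minv (- T (i j2)) ^\<^sub>m 2) *\<^sub>v t (i j2))))))"
proof -
  note Pp = assms(1)
  define I where "I = idx_set L M"
  define K where "K = {..<M}"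
  have finI: "finite I" unfolding I_def by (rule finite_idx_set)
  have finK: "finite K" unfolding K_def by simp
  have Xm: "X \<in> measurable P (PiM {..<M} (\<lambda>_. lborel))" using distr by (rule distributed_measurable)
  have Xk: "(\<lambda>\<omega>. X \<omega> k) \<in> borel_measurable P" if k: "k < M" for k
  proof -
    have "(\<lambda>\<omega>. X \<omega> k) \<in> measurable P lborel"
      by (rule measurable_compose[OF Xm measurable_component_singleton]) (use k in simp)
    then show ?thesis by simp
  qed
  have vnn: "0 \<le> v k" if k: "k < M" for k
    using VaR_nonneg[OF Pp Xk[OF k]] theta[OF k] v_def[OF k] by simp
  define Sv where "Sv i k = me_surv (\<alpha> (i k)) (T (i k)) (t (i k)) (v k)" for i :: "nat \<Rightarrow> nat" and k
  define Av where "Av i k = hh (\<alpha> (i k)) (T (i k)) (ml2 (T (i k)) (t (i k))) (v k)" for i :: "nat \<Rightarrow> nat" and k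
  define Bv where "Bv i k = hh (\<alpha> (i k)) (T (i k)) (ml3 (T (i k)) (t (i k))) (v k)" for i :: "nat \<Rightarrow> nat" and k
  have densik: "ME_density (\<alpha> (i k)) (T (i k)) (t (i k))" if "i \<in> I" "k < M" for i k
    using dens idx_set_mem that unfolding I_def by blast
  have trik: "ME_triple (\<alpha> (i k)) (T (i k)) (t (i k))" if "i \<in> I" "k < M" for i k
    using densik[OF that] unfolding ME_density_def by simp
  have survhh: "Sv i k = hh (\<alpha> (i k)) (T (i k)) (ml1 (T (i k)) (t (i k))) (v k)" if "i \<in> I" "k < M" for i k
    unfolding Sv_def me_surv_def hh_def ME_vecs(9)[OF trik[OF that] refl] ..
  have J0: "Jint (\<alpha> (i k)) (T (i k)) (t (i k)) (v k) 0 = Sv i k" if "i \<in> I" "k < M" for i k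
    using Jint_vals(1)[OF densik[OF that] vnn[OF that(2)]] survhh[OF that] by simp
  have J1: "Jint (\<alpha> (i k)) (T (i k)) (t (i k)) (v k) 1 = v k * Sv i k + Av i k" if "i \<in> I" "k < M" for i k
    using Jint_vals(2)[OF densik[OF that] vnn[OF that(2)]] survhh[OF that] unfolding Av_def by simp
  have J1s: "Jint (\<alpha> (i k)) (T (i k)) (t (i k)) (v k) (Suc 0) = v k * Sv i k + Av i k" if "i \<in> I" "k < M" for i k
    using J1[OF that] by simp
  have J2: "Jint (\<alpha> (i k)) (T (i k)) (t (i k)) (v k) 2 = (v k)\<^sup>2 * Sv i k + 2 * v k * Av i k + 2 * Bv i k"
    if "i \<in> I" "k < M" for i k
    using Jint_vals(3)[OF densik[OF that] vnn[OF that(2)]] survhh[OF that] unfolding Av_def Bv_def by simp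
  have zA: "Av i k = 0" if "i \<in> I" "k < M" "Sv i k = 0" for i k
    using ME_tail_zero(1)[OF densik[OF that(1,2)] vnn[OF that(2)]] survhh[OF that(1,2)] that(3) unfolding Av_def by simp
  have zB: "Bv i k = 0" if "i \<in> I" "k < M" "Sv i k = 0" for i k
    using ME_tail_zero(2)[OF densik[OF that(1,2)] vnn[OF that(2)]] survhh[OF that(1,2)] that(3) unfolding Bv_def by simp
  define \<psi> where "\<psi> e \<omega> = (\<Prod>k<M. indicator {v k<..} (X \<omega> k) * X \<omega> k ^ e k)" for e :: "nat \<Rightarrow> nat" and \<omega>
  have KEY: "integral\<^sup>L P (\<psi> e) = (\<Sum>i\<in>I. p i * (\<Prod>k\<in>K. Jint (\<alpha> (i k)) (T (i k)) (t (i k)) (v k) (e k)))"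
    if "\<And>k. k < M \<Longrightarrow> e k \<le> 2" for e
    unfolding \<psi>_def I_def K_def by (rule key_integral[OF distr fnonneg dens vnn that])
  have indE: "indicator E \<omega> = (\<Prod>k<M. indicator {v k<..} (X \<omega> k) :: real)" if "\<omega> \<in> space P" for \<omega>
    unfolding ind_prod E_def using that by (simp add: indicator_def)
  have psplit: "\<psi> e \<omega> = indicator E \<omega> * (\<Prod>k<M. X \<omega> k ^ e k)" if "\<omega> \<in> space P" for e \<omega>
    unfolding \<psi>_def indE[OF that] by (rule prod.distrib)
  define D where "D = measure P E"
  have Esub: "E \<subseteq> space P" unfolding E_def by auto
  have "D = integral\<^sup>L P (indicator E)"
    unfolding D_def Bochner_Integration.integral_indicator using Esub by (simp add: Int_absorb2)
  also have "\<dots> = integral\<^sup>L P (\<psi> (\<lambda>_. 0))"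
    by (intro Bochner_Integration.integral_cong refl) (simp add: psplit)
  also have "\<dots> = (\<Sum>i\<in>I. p i * (\<Prod>k\<in>K. Jint (\<alpha> (i k)) (T (i k)) (t (i k)) (v k) 0))"
    by (rule KEY) simp
  also have "\<dots> = (\<Sum>i\<in>I. p i * (\<Prod>k\<in>K. Sv i k))"
    by (intro sum.cong refl arg_cong2[where f = "(*)"] prod.cong) (auto simp: K_def J0)
  finally have Dsum: "D = (\<Sum>i\<in>I. p i * (\<Prod>k\<in>K. Sv i k))" .
  have Dpos: "D > 0" unfolding D_def by (rule Epos)
  have CE1: "cond_exp_event P (\<lambda>\<omega>. X \<omega> j) E = (\<Sum>i\<in>I. p i * (\<Prod>k\<in>K. if k = j then v j * Sv i k + Av i k else Sv i k)) / D"
    if j: "j < M" for j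
  proof -
    have "(\<integral>\<omega>. indicator E \<omega> * X \<omega> j \<partial>P) = integral\<^sup>L P (\<psi> (\<lambda>k. if k = j then 1 else 0))"
      by (intro Bochner_Integration.integral_cong refl) (simp add: psplit pow_delta1[OF j])
    also have "\<dots> = (\<Sum>i\<in>I. p i * (\<Prod>k\<in>K. if k = j then v j * Sv i k + Av i k else Sv i k))"
      by (subst KEY) (auto simp: K_def J0 J1 J1s intro!: sum.cong arg_cong2[where f = "(*)"] prod.cong)
    finally show ?thesis unfolding cond_exp_event_def D_def by simp
  qed
  have pRLe: "pRL L M p \<alpha> T t v i = p i * (\<Prod>k\<in>K. Sv i k) / D" for i
    unfolding pRL_def Dsum Sv_def I_def K_def ..
  have aRL2: "alphaRL (\<alpha> (i j)) (T (i j)) (t (i j)) (v j) \<bullet> ((minv (- T (i j)) ^\<^sub>m 2) *\<^sub>v t (i j)) = Av i j / Sv i j"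
    if "i \<in> I" "j < M" for i j
  proof -
    note V = ME_vecs[OF trik[OF that] refl]
    show ?thesis unfolding V(7) alphaRL_sprod[OF trik[OF that] V(2)] Av_def Sv_def ..
  qed
  have aRL3: "alphaRL (\<alpha> (i j)) (T (i j)) (t (i j)) (v j) \<bullet> ((minv (- T (i j)) ^\<^sub>m 3) *\<^sub>v t (i j)) = Bv i j / Sv i j"
    if "i \<in> I" "j < M" for i j
  proof -
    note V = ME_vecs[OF trik[OF that] refl]
    show ?thesis unfolding V(8) alphaRL_sprod[OF trik[OF that] V(3)] Bv_def Sv_def ..
  qed
  have part1: "cond_exp_event P (\<lambda>\<omega>. X \<omega> j) E =
        v j + (\<Sum>i\<in>idx_set L M. pRL L M p \<alpha> T t v i *
           (alphaRL (\<alpha> (i j)) (T (i j)) (t (i j)) (v j)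
              \<bullet> ((minv (- T (i j)) ^\<^sub>m 2) *\<^sub>v t (i j))))" if j: "j < M" for j
  proof -
    have jK: "j \<in> K" using j unfolding K_def by simp
    have "cond_exp_event P (\<lambda>\<omega>. X \<omega> j) E = v j + (\<Sum>i\<in>I. (p i * (\<Prod>k\<in>K. Sv i k) / D) * (Av i j / Sv i j))"
      unfolding CE1[OF j]
      by (rule alg1[where S=Sv and A=Av and p=p and I=I and K=K and D=D, OF finI finK jK Dsum Dpos])
        (use zA j in auto)
    also have "\<dots> = v j + (\<Sum>i\<in>idx_set L M. pRL L M p \<alpha> T t v i *
           (alphaRL (\<alpha> (i j)) (T (i j)) (t (i j)) (v j) \<bullet> ((minv (- T (i j)) ^\<^sub>m 2) *\<^sub>v t (i j))))"
      unfolding I_def[symmetric] pRLe using aRL2 j by (intro arg_cong2[where f = "(+)"] sum.cong refl) auto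
    finally show ?thesis .
  qed
  have part2: "cond_exp_event P (\<lambda>\<omega>. (X \<omega> j)\<^sup>2) E =
        - (v j)\<^sup>2 + 2 * v j * cond_exp_event P (\<lambda>\<omega>. X \<omega> j) E
        + 2 * (\<Sum>i\<in>idx_set L M. pRL L M p \<alpha> T t v i *
           (alphaRL (\<alpha> (i j)) (T (i j)) (t (i j)) (v j)
              \<bullet> ((minv (- T (i j)) ^\<^sub>m 3) *\<^sub>v t (i j))))" if j: "j < M" for j
  proof -
    have jK: "j \<in> K" using j unfolding K_def by simp
    have "(\<integral>\<omega>. indicator E \<omega> * (X \<omega> j)\<^sup>2 \<partial>P) = integral\<^sup>L P (\<psi> (\<lambda>k. if k = j then 2 else 0))"
      by (intro Bochner_Integration.integral_cong refl) (simp add: psplit pow_delta1[OF j])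
    also have "\<dots> = (\<Sum>i\<in>I. p i * (\<Prod>k\<in>K. if k = j then (v j)\<^sup>2 * Sv i k + 2 * v j * Av i k + 2 * Bv i k else Sv i k))"
      by (subst KEY) (auto simp: K_def J0 J2 intro!: sum.cong arg_cong2[where f = "(*)"] prod.cong)
    finally have "cond_exp_event P (\<lambda>\<omega>. (X \<omega> j)\<^sup>2) E
       = (\<Sum>i\<in>I. p i * (\<Prod>k\<in>K. if k = j then (v j)\<^sup>2 * Sv i k + 2 * v j * Av i k + 2 * Bv i k else Sv i k)) / D"
      unfolding cond_exp_event_def D_def by simp
    also have "\<dots> = - (v j)\<^sup>2 + 2 * v j * ((\<Sum>i\<in>I. p i * (\<Prod>k\<in>K. if k = j then v j * Sv i k + Av i k else Sv i k)) / D)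
       + 2 * (\<Sum>i\<in>I. (p i * (\<Prod>k\<in>K. Sv i k) / D) * (Bv i j / Sv i j))"
      by (rule alg2[where S=Sv and A=Av and B=Bv and p=p and I=I and K=K and D=D, OF finI finK jK Dsum Dpos])
        (use zA zB j in auto)
    also have "(\<Sum>i\<in>I. p i * (\<Prod>k\<in>K. if k = j then v j * Sv i k + Av i k else Sv i k)) / D
       = cond_exp_event P (\<lambda>\<omega>. X \<omega> j) E" using CE1[OF j] by simp
    also have "(\<Sum>i\<in>I. (p i * (\<Prod>k\<in>K. Sv i k) / D) * (Bv i j / Sv i j))
       = (\<Sum>i\<in>idx_set L M. pRL L M p \<alpha> T t v i *
           (alphaRL (\<alpha> (i j)) (T (i j)) (t (i j)) (v j) \<bullet> ((minv (- T (i j)) ^\<^sub>m 3) *\<^sub>v t (i j))))"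
      unfolding I_def[symmetric] pRLe using aRL3 j by (intro sum.cong refl) auto
    finally show ?thesis .
  qed
  have part3: "cond_exp_event P (\<lambda>\<omega>. X \<omega> j1 * X \<omega> j2) E =
          - (v j1 * v j2) + v j1 * cond_exp_event P (\<lambda>\<omega>. X \<omega> j2) E
          + v j2 * cond_exp_event P (\<lambda>\<omega>. X \<omega> j1) E
          + (\<Sum>i\<in>idx_set L M. pRL L M p \<alpha> T t v i *
              ((alphaRL (\<alpha> (i j1)) (T (i j1)) (t (i j1)) (v j1)
                  \<bullet> ((minv (- T (i j1)) ^\<^sub>m 2) *\<^sub>v t (i j1))) *
               (alphaRL (\<alpha> (i j2)) (T (i j2)) (t (i j2)) (v j2)
                  \<bullet> ((minv (- T (i j2)) ^\<^sub>m 2) *\<^sub>v t (i j2)))))"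
    if j1: "j1 < M" and j2: "j2 < M" and ne: "j1 \<noteq> j2" for j1 j2
  proof -
    have j1K: "j1 \<in> K" using j1 unfolding K_def by simp
    have j2K: "j2 \<in> K" using j2 unfolding K_def by simp
    have "(\<integral>\<omega>. indicator E \<omega> * (X \<omega> j1 * X \<omega> j2) \<partial>P)
        = integral\<^sup>L P (\<psi> (\<lambda>k. if k = j1 then 1 else if k = j2 then 1 else 0))"
      by (intro Bochner_Integration.integral_cong refl) (simp add: psplit pow_delta2[OF j1 j2 ne])
    also have "\<dots> = (\<Sum>i\<in>I. p i * (\<Prod>k\<in>K. if k = j1 then v j1 * Sv i k + Av i k
            else if k = j2 then v j2 * Sv i k + Av i k else Sv i k))"
      by (subst KEY) (auto simp: K_def J0 J1 J1s intro!: sum.cong arg_cong2[where f = "(*)"] prod.cong)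
    finally have "cond_exp_event P (\<lambda>\<omega>. X \<omega> j1 * X \<omega> j2) E
       = (\<Sum>i\<in>I. p i * (\<Prod>k\<in>K. if k = j1 then v j1 * Sv i k + Av i k
            else if k = j2 then v j2 * Sv i k + Av i k else Sv i k)) / D"
      unfolding cond_exp_event_def D_def by simp
    also have "\<dots> = - (v j1 * v j2) + v j1 * ((\<Sum>i\<in>I. p i * (\<Prod>k\<in>K. if k = j2 then v j2 * Sv i k + Av i k else Sv i k)) / D)
       + v j2 * ((\<Sum>i\<in>I. p i * (\<Prod>k\<in>K. if k = j1 then v j1 * Sv i k + Av i k else Sv i k)) / D)
       + (\<Sum>i\<in>I. (p i * (\<Prod>k\<in>K. Sv i k) / D) * ((Av i j1 / Sv i j1) * (Av i j2 / Sv i j2)))"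
      by (rule alg3[where S=Sv and A=Av and p=p and I=I and K=K and D=D, OF finI finK j1K j2K ne Dsum Dpos])
        (use zA j1 j2 in auto)
    also have "(\<Sum>i\<in>I. p i * (\<Prod>k\<in>K. if k = j2 then v j2 * Sv i k + Av i k else Sv i k)) / D
       = cond_exp_event P (\<lambda>\<omega>. X \<omega> j2) E" using CE1[OF j2] by simp
    also have "(\<Sum>i\<in>I. p i * (\<Prod>k\<in>K. if k = j1 then v j1 * Sv i k + Av i k else Sv i k)) / D
       = cond_exp_event P (\<lambda>\<omega>. X \<omega> j1) E" using CE1[OF j1] by simp
    also have "(\<Sum>i\<in>I. (p i * (\<Prod>k\<in>K. Sv i k) / D) * ((Av i j1 / Sv i j1) * (Av i j2 / Sv i j2)))
       = (\<Sum>i\<in>idx_set L M. pRL L M p \<alpha> T t v i *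
              ((alphaRL (\<alpha> (i j1)) (T (i j1)) (t (i j1)) (v j1)
                  \<bullet> ((minv (- T (i j1)) ^\<^sub>m 2) *\<^sub>v t (i j1))) *
               (alphaRL (\<alpha> (i j2)) (T (i j2)) (t (i j2)) (v j2)
                  \<bullet> ((minv (- T (i j2)) ^\<^sub>m 2) *\<^sub>v t (i j2)))))"
      unfolding I_def[symmetric] pRLe using aRL2 j1 j2 by (intro sum.cong refl) auto
    finally show ?thesis .
  qed
  show ?thesis using part1 part2 part3 by blast
qed


end
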